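(* Under the hypotheses of the cluster expansion theorem (namely: $(\mathbb A,\mathcal A,\mu)$ a measure space with complex measure $\mu$, $|\mu|(\mathbb A)<\infty$; $\zeta$ complex, measurable, symmetric with $|1+\zeta(A,A')|\le1$ for all $A,A'$; $a\ge0$ measurable with $\int d|\mu|(A')\,|\zeta(A,A')|\,e^{a(A')}\le a(A)$ for all $A$ and $\int d|\mu|\,e^{a}<\infty$), one has for all $A\in\mathbb A$ $$\sum_{n\ge1}\int d|\mu|(A_1)\cdots\int d|\mu|(A_n)\Big(\sum_{i=1}^n|\zeta(A,A_i)|\Big)|\varphi(A_1,\dots,A_n)|\le a(A).$$
   Context: $|\mu|$ denotes the total variation of $\mu$. Let $\mathcal C_n$ be the set of connected (unoriented, simple) graphs on the vertex set $\{1,\dots,n\}$. Define $\varphi(A_1)=1$ and, for $n\ge2$, $\varphi(A_1,\dots,A_n)=\frac1{n!}\sum_{G\in\mathcal C_n}\prod_{(i,j)\in G}\zeta(A_i,A_j)$, the product being over the edges of $G$. *)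

theory Defs
  imports "HOL-Analysis.Analysis"
begin

text \<open>Simple graphs on the vertex set {0..<n} (the paper's {1..n}, shifted by one).
  An edge is stored as a pair (i,j) with i < j < n.\<close>

definition graph_edges :: "nat \<Rightarrow> (nat \<times> nat) set" where
  "graph_edges n = {(i, j). i < j \<and> j < n}"

definition connected_graph :: "nat \<Rightarrow> (nat \<times> nat) set \<Rightarrow> bool" where
  "connected_graph n G \<longleftrightarrow> G \<subseteq> graph_edges n \<and>
     (\<forall>i<n. \<forall>j<n. (i, j) \<in> (G \<union> G\<inverse>)\<^sup>*)"

definition conn_graphs :: "nat \<Rightarrow> (nat \<times> nat) set set" where
  "conn_graphs n = {G. connected_graph n G}"

text \<open>The Ursell function phi(A_1,...,A_n), the points being x 0, ..., x (n-1).\<close>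
definition ursell :: "('a \<Rightarrow> 'a \<Rightarrow> complex) \<Rightarrow> nat \<Rightarrow> (nat \<Rightarrow> 'a) \<Rightarrow> complex" where
  "ursell \<zeta> n x = (if n = 1 then 1 else
     (1 / of_nat (fact n)) * (\<Sum>G\<in>conn_graphs n. \<Prod>(i, j)\<in>G. \<zeta> (x i) (x j)))"

end

theory Submission
  imports Defs "HOL-Analysis.Analysis"
begin


definition edges :: "nat set \<Rightarrow> (nat \<times> nat) set" where
  "edges V = {(i, j). i < j \<and> i \<in> V \<and> j \<in> V}"

definition conn :: "nat set \<Rightarrow> (nat \<times> nat) set \<Rightarrow> bool" where
  "conn V G \<longleftrightarrow> G \<subseteq> edges V \<and> (\<forall>i\<in>V. \<forall>j\<in>V. (i, j) \<in> (G \<union> G\<inverse>)\<^sup>*)"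

definition Cw :: "(nat \<times> nat \<Rightarrow> 'b::comm_ring_1) \<Rightarrow> nat set \<Rightarrow> 'b" where
  "Cw w V = (\<Sum>G\<in>{G. conn V G}. \<Prod>e\<in>G. w e)"

definition Ww :: "(nat \<times> nat \<Rightarrow> 'b::comm_ring_1) \<Rightarrow> nat set \<Rightarrow> 'b" where
  "Ww w V = (\<Prod>e\<in>edges V. 1 + w e)"

lemma finite_edges[simp]: "finite V \<Longrightarrow> finite (edges V)"
proof -
  assume "finite V"
  then have "finite (V \<times> V)" by simp
  moreover have "edges V \<subseteq> V \<times> V" by (auto simp: edges_def)
  ultimately show ?thesis by (rule finite_subset[rotated])
qed

lemma finite_conn[simp]: "finite V \<Longrightarrow> finite {G. conn V G}"
  by (rule finite_subset[of _ "Pow (edges V)"]) (auto simp: conn_def)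

lemma Ww_sum: "finite V \<Longrightarrow> Ww w V = (\<Sum>F\<in>Pow (edges V). \<Prod>e\<in>F. w e)"
  unfolding Ww_def by (subst add.commute) (simp add: prod_add)

definition gcomp :: "(nat \<times> nat) set \<Rightarrow> nat \<Rightarrow> nat set" where
  "gcomp F v = {j. (v, j) \<in> (F \<union> F\<inverse>)\<^sup>*}"

lemma edges_mono: "A \<subseteq> B \<Longrightarrow> edges A \<subseteq> edges B"
  by (auto simp: edges_def)

lemma reach_in: assumes "F \<subseteq> edges V" "(v, j) \<in> (F \<union> F\<inverse>)\<^sup>*" "v \<in> V" shows "j \<in> V"
  using assms(2,1,3) by (induction rule: rtrancl_induct) (auto simp: edges_def)

lemma comp_sub: "F \<subseteq> edges V \<Longrightarrow> v \<in> V \<Longrightarrow> gcomp F v \<subseteq> V"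
  using reach_in by (auto simp: gcomp_def)

lemma sym_reach: "(i, j) \<in> (F \<union> F\<inverse>)\<^sup>* \<Longrightarrow> (j, i) \<in> (F \<union> F\<inverse>)\<^sup>*"
proof -
  assume "(i, j) \<in> (F \<union> F\<inverse>)\<^sup>*"
  then have "(j, i) \<in> ((F \<union> F\<inverse>)\<inverse>)\<^sup>*" by (simp add: rtrancl_converse)
  moreover have "(F \<union> F\<inverse>)\<inverse> = F \<union> F\<inverse>" by auto
  ultimately show ?thesis by simp
qed

lemma comp_closed:
  assumes "(i, j) \<in> F" shows "i \<in> gcomp F v \<longleftrightarrow> j \<in> gcomp F v"
proof
  assume "i \<in> gcomp F v"
  then show "j \<in> gcomp F v" using assms unfolding gcomp_def
    by (auto intro: rtrancl_into_rtrancl)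
next
  assume "j \<in> gcomp F v"
  then show "i \<in> gcomp F v" using assms unfolding gcomp_def
    by (auto intro: rtrancl_into_rtrancl)
qed

lemma reach_restrict:
  assumes "(v, j) \<in> (F \<union> F\<inverse>)\<^sup>*" "F \<subseteq> edges V"
  shows "(v, j) \<in> (F \<inter> edges (gcomp F v) \<union> (F \<inter> edges (gcomp F v))\<inverse>)\<^sup>*"
  using assms(1)
proof (induction rule: rtrancl_induct)
  case base then show ?case by simp
next
  case (step y z)
  have yc: "y \<in> gcomp F v" using step(1) by (simp add: gcomp_def)
  have zc: "z \<in> gcomp F v" using step(1,2) by (auto simp: gcomp_def intro: rtrancl_into_rtrancl)
  from step(2) have "(y, z) \<in> F \<inter> edges (gcomp F v) \<union> (F \<inter> edges (gcomp F v))\<inverse>"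
    using yc zc assms(2) by (auto simp: edges_def)
  with step(3) show ?case by (rule rtrancl_into_rtrancl)
qed

lemma conn_comp:
  assumes "F \<subseteq> edges V"
  shows "conn (gcomp F v) (F \<inter> edges (gcomp F v))"
  unfolding conn_def
proof (intro conjI ballI)
  fix i j assume i: "i \<in> gcomp F v" and j: "j \<in> gcomp F v"
  let ?R = "F \<inter> edges (gcomp F v) \<union> (F \<inter> edges (gcomp F v))\<inverse>"
  have "(v, i) \<in> ?R\<^sup>*" using reach_restrict[OF _ assms] i by (simp add: gcomp_def)
  then have "(i, v) \<in> ?R\<^sup>*" by (rule sym_reach)
  moreover have "(v, j) \<in> ?R\<^sup>*" using reach_restrict[OF _ assms] j by (simp add: gcomp_def)
  ultimately show "(i, j) \<in> ?R\<^sup>*" by (rule rtrancl_trans)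
qed auto

lemma split_comp:
  assumes "F \<subseteq> edges V"
  shows "F = (F \<inter> edges (gcomp F v)) \<union> (F \<inter> edges (V - gcomp F v))"
proof -
  have "e \<in> edges (gcomp F v) \<union> edges (V - gcomp F v)" if "e \<in> F" for e
  proof -
    obtain i j where e: "e = (i, j)" by fastforce
    have "i \<in> gcomp F v \<longleftrightarrow> j \<in> gcomp F v" using comp_closed that e by simp
    then show ?thesis using that assms e by (auto simp: edges_def)
  qed
  then show ?thesis by blast
qed

lemma comp_union:
  assumes G: "conn K G" and H: "H \<subseteq> edges (V - K)" and v: "v \<in> K" and KV: "K \<subseteq> V"
  shows "gcomp (G \<union> H) v = K"
proof
  show "K \<subseteq> gcomp (G \<union> H) v"
  proof
    fix j assume "j \<in> K"
    then have "(v, j) \<in> (G \<union> G\<inverse>)\<^sup>*" using G v by (auto simp: conn_def)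
    moreover have "G \<union> G\<inverse> \<subseteq> (G \<union> H) \<union> (G \<union> H)\<inverse>" by auto
    ultimately show "j \<in> gcomp (G \<union> H) v" unfolding gcomp_def using rtrancl_mono by blast
  qed
next
  show "gcomp (G \<union> H) v \<subseteq> K"
  proof
    fix j assume "j \<in> gcomp (G \<union> H) v"
    then have "(v, j) \<in> ((G \<union> H) \<union> (G \<union> H)\<inverse>)\<^sup>*" by (simp add: gcomp_def)
    then show "j \<in> K"
    proof (induction rule: rtrancl_induct)
      case base then show ?case using v .
    next
      case (step y z)
      then show ?case using G H by (auto simp: conn_def edges_def)
    qed
  qed
qed

lemma edges_disj: "A \<inter> B = {} \<Longrightarrow> edges A \<inter> edges B = {}"
  by (auto simp: edges_def)

lemma optionA:
  assumes V: "finite V" and v: "v \<in> V"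
  shows "Ww w V = (\<Sum>K\<in>{K. K \<subseteq> V \<and> v \<in> K}. Cw w K * Ww w (V - K))"
proof -
  let ?S = "SIGMA K:{K. K \<subseteq> V \<and> v \<in> K}. SIGMA G:{G. conn K G}. Pow (edges (V - K))"
  have fin: "finite {K. K \<subseteq> V \<and> v \<in> K}" using V by simp
  have "(\<Sum>K\<in>{K. K \<subseteq> V \<and> v \<in> K}. Cw w K * Ww w (V - K)) =
      (\<Sum>K\<in>{K. K \<subseteq> V \<and> v \<in> K}. \<Sum>G\<in>{G. conn K G}. \<Sum>H\<in>Pow (edges (V - K)). (\<Prod>e\<in>G. w e) * (\<Prod>e\<in>H. w e))"
    unfolding Cw_def using V
    by (intro sum.cong refl) (auto simp: Ww_sum sum_product finite_subset)
  also have "\<dots> = (\<Sum>(K, G, H)\<in>?S. (\<Prod>e\<in>G. w e) * (\<Prod>e\<in>H. w e))"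
  proof -
    have fK: "K \<in> {K. K \<subseteq> V \<and> v \<in> K} \<Longrightarrow> finite K" for K using V finite_subset by auto
    have "(\<Sum>K\<in>{K. K \<subseteq> V \<and> v \<in> K}. \<Sum>G\<in>{G. conn K G}. \<Sum>H\<in>Pow (edges (V - K)). (\<Prod>e\<in>G. w e) * (\<Prod>e\<in>H. w e))
       = (\<Sum>K\<in>{K. K \<subseteq> V \<and> v \<in> K}. \<Sum>(G, H)\<in>(SIGMA G:{G. conn K G}. Pow (edges (V - K))). (\<Prod>e\<in>G. w e) * (\<Prod>e\<in>H. w e))"
      by (rule sum.cong[OF refl]) (simp add: sum.cartesian_product)
    also have "\<dots> = (\<Sum>(K, GH)\<in>?S. case GH of (G, H) \<Rightarrow> (\<Prod>e\<in>G. w e) * (\<Prod>e\<in>H. w e))"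
    proof (rule sum.Sigma[OF fin])
      show "\<forall>K\<in>{K. K \<subseteq> V \<and> v \<in> K}. finite (SIGMA G:{G. conn K G}. Pow (edges (V - K)))"
      proof
        fix K assume "K \<in> {K. K \<subseteq> V \<and> v \<in> K}"
        then have "finite K" "finite (V - K)" using fK V by auto
        then show "finite (SIGMA G:{G. conn K G}. Pow (edges (V - K)))"
          by (intro finite_SigmaI) auto
      qed
    qed
    finally show ?thesis by (simp only: split_def)
  qed
  also have "\<dots> = (\<Sum>F\<in>Pow (edges V). \<Prod>e\<in>F. w e)"
  proof (rule sum.reindex_bij_witness[where i = "\<lambda>F. (gcomp F v, F \<inter> edges (gcomp F v), F \<inter> edges (V - gcomp F v))"
        and j = "\<lambda>(K, G, H). G \<union> H"])
    fix a assume a: "a \<in> ?S"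
    then obtain K G H where aa: "a = (K, G, H)" and K: "K \<subseteq> V" "v \<in> K" and G: "conn K G"
      and H: "H \<subseteq> edges (V - K)" by auto
    have c: "gcomp (G \<union> H) v = K" using comp_union[OF G H K(2) K(1)] .
    have G': "G \<subseteq> edges K" using G by (simp add: conn_def)
    have d: "edges K \<inter> edges (V - K) = {}" by (rule edges_disj) auto
    show "(case (\<lambda>(K, G, H). G \<union> H) a of F \<Rightarrow> (gcomp F v, F \<inter> edges (gcomp F v), F \<inter> edges (V - gcomp F v))) = a"
      using c G' H d aa by auto
    have e1: "edges K \<subseteq> edges V" using K(1) by (rule edges_mono)
    have e2: "edges (V - K) \<subseteq> edges V" by (rule edges_mono) auto
    have GH: "G \<union> H \<subseteq> edges V" using G' H e1 e2 by blast
    show "(\<lambda>(K, G, H). G \<union> H) a \<in> Pow (edges V)"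
      using aa GH by simp
    have fG: "finite G" "finite H" using GH V finite_subset by (metis finite_edges le_sup_iff)+
    have "G \<inter> H = {}" using G' H d by blast
    then have "prod w (G \<union> H) = prod w G * prod w H" using fG by (rule prod.union_disjoint[rotated 2])
    then show "(case (\<lambda>(K, G, H). G \<union> H) a of F \<Rightarrow> prod w F) = (case a of (K, G, H) \<Rightarrow> prod w G * prod w H)"
      using aa by simp
  next
    fix F assume F: "F \<in> Pow (edges V)"
    then have F': "F \<subseteq> edges V" by simp
    show "(\<lambda>(K, G, H). G \<union> H) (gcomp F v, F \<inter> edges (gcomp F v), F \<inter> edges (V - gcomp F v)) = F"
      using split_comp[OF F'] by simp
    have "v \<in> gcomp F v" by (simp add: gcomp_def)
    then show "(gcomp F v, F \<inter> edges (gcomp F v), F \<inter> edges (V - gcomp F v)) \<in> ?S"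
      using comp_sub[OF F' v] conn_comp[OF F'] by auto
  qed
  also have "\<dots> = Ww w V" using V by (simp add: Ww_sum)
  finally show ?thesis by simp
qed


lemma sum_sigma_swap:
  assumes fA: "finite A" and fA': "finite A'"
    and fB: "\<And>x. x \<in> A \<Longrightarrow> finite (B x)" and fB': "\<And>y. y \<in> A' \<Longrightarrow> finite (B' y)"
    and eq: "\<And>x y. (x \<in> A \<and> y \<in> B x) \<longleftrightarrow> (y \<in> A' \<and> x \<in> B' y)"
  shows "(\<Sum>x\<in>A. \<Sum>y\<in>B x. f x y) = (\<Sum>y\<in>A'. \<Sum>x\<in>B' y. f x y)"
proof -
  have "(\<Sum>x\<in>A. \<Sum>y\<in>B x. f x y) = sum (case_prod f) (Sigma A B)"
    by (rule sum.Sigma[OF fA]) (use fB in auto)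
  also have "Sigma A B = prod.swap ` Sigma A' B'"
  proof -
    have 1: "prod.swap ` Sigma A' B' = {(x,y). y \<in> A' \<and> x \<in> B' y}" by force
    have 2: "Sigma A B = {(x,y). x \<in> A \<and> y \<in> B x}" by auto
    show ?thesis unfolding 1 2 using eq by blast
  qed
  also have "sum (case_prod f) \<dots> = sum (case_prod f \<circ> prod.swap) (Sigma A' B')"
    by (rule sum.reindex) simp
  also have "\<dots> = (\<Sum>y\<in>A'. \<Sum>x\<in>B' y. f x y)"
    by (subst sum.Sigma[OF fA']) (use fB' in \<open>auto simp: comp_def case_prod_unfold\<close>)
  finally show ?thesis .
qed

fun Lp :: "(nat set \<Rightarrow> 'b::comm_ring_1) \<Rightarrow> nat \<Rightarrow> nat set \<Rightarrow> 'b" where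
  "Lp c 0 R = (if R = {} then 1 else 0)"
| "Lp c (Suc l) R = (\<Sum>K\<in>{K. K \<subseteq> R \<and> K \<noteq> {}}. c K * Lp c l (R - K))"

definition Pexp :: "(nat set \<Rightarrow> 'b::field_char_0) \<Rightarrow> nat set \<Rightarrow> 'b" where
  "Pexp c R = (\<Sum>l\<le>card R. Lp c l R / fact l)"

lemma Lp_zero: "finite R \<Longrightarrow> card R < l \<Longrightarrow> Lp c l R = 0"
proof (induction l arbitrary: R)
  case 0 then show ?case by simp
next
  case (Suc l)
  have "Lp c l (R - K) = 0" if "K \<subseteq> R" "K \<noteq> {}" for K
  proof (rule Suc.IH)
    show "finite (R - K)" using Suc.prems by simp
    have "card K \<ge> 1" using that Suc.prems(1) finite_subset by (metis One_nat_def Suc_leI card_gt_0_iff)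
    moreover have "card (R - K) = card R - card K" using that Suc.prems(1) finite_subset card_Diff_subset by metis
    moreover have "card K \<le> card R" using that Suc.prems(1) by (simp add: card_mono)
    ultimately show "card (R - K) < l" using Suc.prems(2) by arith
  qed
  then show ?case by simp
qed

lemma Pexp_ext: "finite R \<Longrightarrow> card R \<le> n \<Longrightarrow> Pexp c R = (\<Sum>l\<le>n. Lp c l R / fact l)"
  unfolding Pexp_def
  by (rule sum.mono_neutral_left) (auto simp: Lp_zero)

lemma Lp_one: "finite R \<Longrightarrow> Lp c (Suc 0) R = (if R = {} then 0 else c R)"
proof -
  assume R: "finite R"
  have "Lp c (Suc 0) R = (\<Sum>K\<in>{K. K \<subseteq> R \<and> K \<noteq> {}}. if K = R then c K else 0)"
    by (auto intro!: sum.cong split: if_splits)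
  also have "\<dots> = (if R = {} then 0 else c R)"
    using R by (subst sum.delta) auto
  finally show ?thesis .
qed

lemma Lp_sym:
  assumes "finite R" "v \<in> R"
  shows "Lp c (Suc l) R = of_nat (Suc l) * (\<Sum>K\<in>{K. K \<subseteq> R \<and> v \<in> K}. c K * Lp c l (R - K))"
  using assms
proof (induction l arbitrary: R)
  case 0
  have "(\<Sum>K\<in>{K. K \<subseteq> R \<and> v \<in> K}. c K * Lp c 0 (R - K)) = (\<Sum>K\<in>{K. K \<subseteq> R \<and> v \<in> K}. if K = R then c K else 0)"
    by (auto intro!: sum.cong split: if_splits)
  also have "\<dots> = c R" using 0 by (subst sum.delta) auto
  finally have "(\<Sum>K\<in>{K. K \<subseteq> R \<and> v \<in> K}. c K * Lp c 0 (R - K)) = c R" .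
  then show ?case using 0 by (auto simp del: Lp.simps simp add: Lp_one)
next
  case (Suc l)
  have fR: "finite R" and vR: "v \<in> R" by fact+
  let ?A = "{K. K \<subseteq> R \<and> v \<in> K}"
  let ?B = "{K. K \<subseteq> R \<and> K \<noteq> {} \<and> v \<notin> K}"
  have split: "{K. K \<subseteq> R \<and> K \<noteq> {}} = ?A \<union> ?B" by auto
  have fin: "finite ?A" "finite ?B" using fR by auto
  have "Lp c (Suc (Suc l)) R = (\<Sum>K\<in>?A. c K * Lp c (Suc l) (R - K)) + (\<Sum>K\<in>?B. c K * Lp c (Suc l) (R - K))"
    unfolding Lp.simps split by (rule sum.union_disjoint) (use fin in auto)
  also have "(\<Sum>K\<in>?B. c K * Lp c (Suc l) (R - K)) =
      (\<Sum>K\<in>?B. \<Sum>K'\<in>{K'. K' \<subseteq> R - K \<and> v \<in> K'}. of_nat (Suc l) * (c K * c K' * Lp c l (R - K - K')))"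
  proof (rule sum.cong[OF refl])
    fix K assume K: "K \<in> ?B"
    have "Lp c (Suc l) (R - K) = of_nat (Suc l) * (\<Sum>K'\<in>{K'. K' \<subseteq> R - K \<and> v \<in> K'}. c K' * Lp c l (R - K - K'))"
      using K fR vR by (intro Suc.IH) auto
    then show "c K * Lp c (Suc l) (R - K) = (\<Sum>K'\<in>{K'. K' \<subseteq> R - K \<and> v \<in> K'}. of_nat (Suc l) * (c K * c K' * Lp c l (R - K - K')))"
      by (simp add: sum_distrib_left algebra_simps)
  qed
  also have "\<dots> = (\<Sum>K'\<in>?A. \<Sum>K\<in>{K. K \<subseteq> R - K' \<and> K \<noteq> {}}. of_nat (Suc l) * (c K * c K' * Lp c l (R - K - K')))"
    by (rule sum_sigma_swap) (use fR in auto)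
  also have "\<dots> = (\<Sum>K'\<in>?A. of_nat (Suc l) * (c K' * Lp c (Suc l) (R - K')))"
    by (rule sum.cong[OF refl]) (auto simp: sum_distrib_left algebra_simps Diff_eq Int_commute Int_left_commute intro!: sum.cong)
  also have "\<dots> = of_nat (Suc l) * (\<Sum>K\<in>?A. c K * Lp c (Suc l) (R - K))"
    by (simp add: sum_distrib_left)
  finally show ?case by (simp add: algebra_simps)
qed

lemma Pexp_empty[simp]: "Pexp c {} = 1"
  by (simp add: Pexp_def)

lemma Pexp_rec:
  assumes R: "finite R" and v: "v \<in> R"
  shows "Pexp c R = (\<Sum>K\<in>{K. K \<subseteq> R \<and> v \<in> K}. c K * Pexp c (R - K))"
proof -
  obtain m where m: "card R = Suc m" using R v by (metis card_0_eq empty_iff not0_implies_Suc)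
  have "Pexp c R = (\<Sum>l\<le>Suc m. Lp c l R / fact l)" by (simp add: Pexp_def m)
  also have "\<dots> = (\<Sum>l\<le>m. Lp c (Suc l) R / fact (Suc l))"
    using v by (subst sum.atMost_Suc_shift) auto
  also have "\<dots> = (\<Sum>l\<le>m. \<Sum>K\<in>{K. K \<subseteq> R \<and> v \<in> K}. c K * (Lp c l (R - K) / fact l))"
  proof (rule sum.cong[OF refl])
    fix l
    let ?S = "(\<Sum>K\<in>{K. K \<subseteq> R \<and> v \<in> K}. c K * Lp c l (R - K))"
    have "Lp c (Suc l) R / fact (Suc l) = (of_nat (Suc l) * ?S) / (of_nat (Suc l) * fact l)"
      by (simp only: Lp_sym[OF R v] fact_Suc of_nat_mult)
    also have "\<dots> = ?S / fact l"
      by (rule mult_divide_mult_cancel_left, rule of_nat_neq_0)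
    finally show "Lp c (Suc l) R / fact (Suc l) = (\<Sum>K\<in>{K. K \<subseteq> R \<and> v \<in> K}. c K * (Lp c l (R - K) / fact l))"
      by (simp add: sum_divide_distrib)
  qed
  also have "\<dots> = (\<Sum>K\<in>{K. K \<subseteq> R \<and> v \<in> K}. c K * (\<Sum>l\<le>m. Lp c l (R - K) / fact l))"
    by (subst sum.swap) (simp add: sum_distrib_left)
  also have "\<dots> = (\<Sum>K\<in>{K. K \<subseteq> R \<and> v \<in> K}. c K * Pexp c (R - K))"
  proof (rule sum.cong[OF refl])
    fix K assume K: "K \<in> {K. K \<subseteq> R \<and> v \<in> K}"
    have "R - K \<subseteq> R - {v}" using K by auto
    then have "card (R - K) \<le> card (R - {v})" using R by (intro card_mono) auto
    also have "\<dots> = m" using R v m by simp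
    finally have "card (R - K) \<le> m" .
    then show "c K * (\<Sum>l\<le>m. Lp c l (R - K) / fact l) = c K * Pexp c (R - K)"
      using R by (simp add: Pexp_ext)
  qed
  finally show ?thesis .
qed


lemma finite_subsets_P[simp]: "finite S \<Longrightarrow> finite {K. K \<subseteq> S \<and> P K}"
  by (rule finite_subset[of _ "Pow S"]) auto

lemma finite_subsets_P'[simp]: "finite R \<Longrightarrow> S \<subseteq> R \<Longrightarrow> finite {K. K \<subseteq> S \<and> P K}"
  using finite_subset by (metis finite_subsets_P)

lemma Ww_empty[simp]: "Ww w {} = 1"
  by (simp add: Ww_def edges_def)

lemma Ww_Pexp: "finite R \<Longrightarrow> Ww w R = Pexp (Cw w) R"
proof (induction R rule: finite_psubset_induct)
  case (psubset R)
  show ?case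
  proof (cases "R = {}")
    case True then show ?thesis by simp
  next
    case False
    then obtain v where v: "v \<in> R" by auto
    have "Ww w R = (\<Sum>K\<in>{K. K \<subseteq> R \<and> v \<in> K}. Cw w K * Ww w (R - K))"
      by (rule optionA[OF psubset.hyps(1) v])
    also have "\<dots> = (\<Sum>K\<in>{K. K \<subseteq> R \<and> v \<in> K}. Cw w K * Pexp (Cw w) (R - K))"
      by (rule sum.cong[OF refl]) (subst psubset.IH, auto)
    also have "\<dots> = Pexp (Cw w) R"
      by (rule Pexp_rec[OF psubset.hyps(1) v, symmetric])
    finally show ?thesis .
  qed
qed

lemma Lp_mult: "finite R \<Longrightarrow> Lp (\<lambda>K. c K * prod h K) l R = Lp c l R * prod h R"
proof (induction l arbitrary: R)
  case 0 then show ?case by simp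
next
  case (Suc l)
  have "c K * prod h K * Lp (\<lambda>K. c K * prod h K) l (R - K) = c K * Lp c l (R - K) * prod h R"
    if "K \<subseteq> R" for K
  proof -
    have "prod h R = prod h (R - K) * prod h K" using that Suc.prems by (rule prod.subset_diff)
    then show ?thesis using Suc.IH[of "R - K"] Suc.prems by (simp add: algebra_simps)
  qed
  then show ?case by (simp add: sum_distrib_right)
qed

lemma Pexp_mult: "finite R \<Longrightarrow> Pexp (\<lambda>K. c K * prod h K) R = Pexp c R * prod h R"
  unfolding Pexp_def sum_distrib_right by (rule sum.cong) (simp_all add: Lp_mult times_divide_eq_left)

lemma Pexp_add:
  fixes a b :: "nat set \<Rightarrow> 'b::field_char_0"
  shows "finite R \<Longrightarrow> Pexp (\<lambda>K. a K + b K) R = (\<Sum>S\<in>Pow R. Pexp a S * Pexp b (R - S))"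
proof (induction R rule: finite_psubset_induct)
  case (psubset R)
  note fR = psubset.hyps(1)
  show ?case
  proof (cases "R = {}")
    case True then show ?thesis by simp
  next
    case False
    then obtain v where v: "v \<in> R" by auto
    let ?KA = "{K. K \<subseteq> R \<and> v \<in> K}"
    define X where "X K = (\<Sum>S\<in>Pow (R - K). Pexp a S * Pexp b (R - K - S))" for K
    have "Pexp (\<lambda>K. a K + b K) R = (\<Sum>K\<in>?KA. (a K + b K) * Pexp (\<lambda>K. a K + b K) (R - K))"
      by (rule Pexp_rec[OF fR v])
    also have "\<dots> = (\<Sum>K\<in>?KA. (a K + b K) * X K)"
      unfolding X_def by (rule sum.cong[OF refl]) (subst psubset.IH, use fR in auto)
    also have "\<dots> = (\<Sum>K\<in>?KA. a K * X K) + (\<Sum>K\<in>?KA. b K * X K)"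
      by (simp add: algebra_simps sum.distrib)
    finally have L: "Pexp (\<lambda>K. a K + b K) R = (\<Sum>K\<in>?KA. a K * X K) + (\<Sum>K\<in>?KA. b K * X K)" .
    have split: "Pow R = {S. S \<subseteq> R \<and> v \<in> S} \<union> {S. S \<subseteq> R \<and> v \<notin> S}" by auto
    have "(\<Sum>S\<in>Pow R. Pexp a S * Pexp b (R - S)) =
        (\<Sum>S\<in>{S. S \<subseteq> R \<and> v \<in> S}. Pexp a S * Pexp b (R - S)) + (\<Sum>S\<in>{S. S \<subseteq> R \<and> v \<notin> S}. Pexp a S * Pexp b (R - S))"
      unfolding split by (rule sum.union_disjoint) (use fR in auto)
    also have "(\<Sum>S\<in>{S. S \<subseteq> R \<and> v \<in> S}. Pexp a S * Pexp b (R - S)) = 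
        (\<Sum>S\<in>{S. S \<subseteq> R \<and> v \<in> S}. \<Sum>K\<in>{K. K \<subseteq> S \<and> v \<in> K}. a K * Pexp a (S - K) * Pexp b (R - S))"
    proof (rule sum.cong[OF refl])
      fix S assume S: "S \<in> {S. S \<subseteq> R \<and> v \<in> S}"
      then have fS: "finite S" using fR finite_subset by auto
      show "Pexp a S * Pexp b (R - S) = (\<Sum>K\<in>{K. K \<subseteq> S \<and> v \<in> K}. a K * Pexp a (S - K) * Pexp b (R - S))"
        using S by (subst Pexp_rec[OF fS, where v = v]) (auto simp: sum_distrib_right)
    qed
    also have "\<dots> = (\<Sum>K\<in>?KA. \<Sum>S\<in>{S. K \<subseteq> S \<and> S \<subseteq> R}. a K * Pexp a (S - K) * Pexp b (R - S))"
      by (rule sum_sigma_swap) (use fR in \<open>auto intro: finite_subset\<close>)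
    also have "\<dots> = (\<Sum>K\<in>?KA. a K * X K)"
    proof (rule sum.cong[OF refl])
      fix K assume K: "K \<in> ?KA"
      have "(\<Sum>S\<in>{S. K \<subseteq> S \<and> S \<subseteq> R}. a K * Pexp a (S - K) * Pexp b (R - S)) =
          (\<Sum>S\<in>Pow (R - K). a K * Pexp a S * Pexp b (R - K - S))"
      proof (rule sum.reindex_bij_witness[where j = "\<lambda>S. S - K" and i = "\<lambda>S. S \<union> K"])
        fix S assume "S \<in> {S. K \<subseteq> S \<and> S \<subseteq> R}"
        then show "S - K \<union> K = S" "S - K \<in> Pow (R - K)"
          "a K * Pexp a (S - K) * Pexp b (R - K - (S - K)) = a K * Pexp a (S - K) * Pexp b (R - S)"
          by (auto intro!: arg_cong[where f = "Pexp b"])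
      next
        fix S assume "S \<in> Pow (R - K)"
        then show "S \<union> K - K = S" "S \<union> K \<in> {S. K \<subseteq> S \<and> S \<subseteq> R}" using K by auto
      qed
      then show "(\<Sum>S\<in>{S. K \<subseteq> S \<and> S \<subseteq> R}. a K * Pexp a (S - K) * Pexp b (R - S)) = a K * X K"
        by (simp add: X_def sum_distrib_left algebra_simps)
    qed
    also have "(\<Sum>S\<in>{S. S \<subseteq> R \<and> v \<notin> S}. Pexp a S * Pexp b (R - S)) =
        (\<Sum>S\<in>{S. S \<subseteq> R \<and> v \<notin> S}. \<Sum>K\<in>{K. K \<subseteq> R - S \<and> v \<in> K}. b K * Pexp a S * Pexp b (R - S - K))"
      by (rule sum.cong[OF refl]) (subst Pexp_rec[where v = v], use fR v in \<open>auto simp: sum_distrib_left algebra_simps\<close>)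
    also have "\<dots> = (\<Sum>K\<in>?KA. \<Sum>S\<in>Pow (R - K). b K * Pexp a S * Pexp b (R - S - K))"
      by (rule sum_sigma_swap) (use fR in \<open>auto intro: finite_subset\<close>)
    also have "\<dots> = (\<Sum>K\<in>?KA. b K * X K)"
      unfolding X_def by (rule sum.cong[OF refl]) (auto simp: sum_distrib_left algebra_simps Diff_eq Int_commute Int_left_commute intro!: sum.cong)
    finally show ?thesis using L by simp
  qed
qed

definition ed :: "nat \<Rightarrow> nat \<Rightarrow> nat \<times> nat" where "ed r u = (min r u, max r u)"

lemma Ww_insert:
  assumes R: "finite R" and r: "r \<notin> R"
  shows "Ww w (insert r R) = Ww w R * (\<Prod>u\<in>R. 1 + w (ed r u))"
proof -
  have E: "edges (insert r R) = edges R \<union> ed r ` R"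
  proof (rule set_eqI)
    fix p :: "nat \<times> nat"
    obtain i j where p: "p = (i, j)" by fastforce
    have "(i, j) \<in> ed r ` R \<longleftrightarrow> (i = r \<and> j \<in> R \<and> r < j) \<or> (j = r \<and> i \<in> R \<and> i < r)"
    proof
      assume "(i, j) \<in> ed r ` R"
      then obtain u where u: "u \<in> R" "(i, j) = (min r u, max r u)" by (auto simp: ed_def)
      then have "u \<noteq> r" using r by auto
      then show "(i = r \<and> j \<in> R \<and> r < j) \<or> (j = r \<and> i \<in> R \<and> i < r)"
        using u by (cases "r < u") (auto simp: min_def max_def)
    next
      assume "(i = r \<and> j \<in> R \<and> r < j) \<or> (j = r \<and> i \<in> R \<and> i < r)"
      then show "(i, j) \<in> ed r ` R"
      proof
        assume "i = r \<and> j \<in> R \<and> r < j"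
        then show ?thesis by (intro image_eqI[of _ _ j]) (auto simp: ed_def)
      next
        assume "j = r \<and> i \<in> R \<and> i < r"
        then show ?thesis by (intro image_eqI[of _ _ i]) (auto simp: ed_def)
      qed
    qed
    then show "p \<in> edges (insert r R) \<longleftrightarrow> p \<in> edges R \<union> ed r ` R"
      using r unfolding p by (auto simp: edges_def)
  qed
  have D: "edges R \<inter> ed r ` R = {}" using r by (auto simp: edges_def ed_def min_def max_def split: if_splits)
  have I: "inj_on (ed r) R" using r by (auto simp: inj_on_def ed_def min_def max_def split: if_splits)
  show ?thesis unfolding Ww_def E
    using R D I by (simp add: prod.union_disjoint prod.reindex)
qed

lemma root:
  fixes w :: "nat \<times> nat \<Rightarrow> 'b::field_char_0"
  shows "finite R \<Longrightarrow> r \<notin> R \<Longrightarrow>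
    Cw w (insert r R) = Pexp (\<lambda>K. Cw w K * ((\<Prod>u\<in>K. 1 + w (ed r u)) - 1)) R"
proof (induction R rule: finite_psubset_induct)
  case (psubset R)
  note fR = psubset.hyps(1) and r = psubset.prems
  define g where "g = (\<lambda>K. \<Prod>u\<in>K. 1 + w (ed r u))"
  define c' where "c' = (\<lambda>K. Cw w K * (g K - 1))"
  define X where "X S = Cw w (insert r S)" for S
  define Y where "Y S = Pexp c' S" for S
  have E1: "Ww w (insert r R) = (\<Sum>S\<in>Pow R. X S * Ww w (R - S))"
  proof -
    have "Ww w (insert r R) = (\<Sum>K\<in>{K. K \<subseteq> insert r R \<and> r \<in> K}. Cw w K * Ww w (insert r R - K))"
      by (rule optionA) (use fR in auto)
    also have "{K. K \<subseteq> insert r R \<and> r \<in> K} = insert r ` Pow R"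
    proof
      show "{K. K \<subseteq> insert r R \<and> r \<in> K} \<subseteq> insert r ` Pow R"
      proof
        fix K assume "K \<in> {K. K \<subseteq> insert r R \<and> r \<in> K}"
        then have "K = insert r (K - {r})" "K - {r} \<in> Pow R" by auto
        then show "K \<in> insert r ` Pow R" by blast
      qed
    qed auto
    also have "(\<Sum>K\<in>insert r ` Pow R. Cw w K * Ww w (insert r R - K)) = (\<Sum>S\<in>Pow R. X S * Ww w (R - S))"
    proof (subst sum.reindex)
      show "inj_on (insert r) (Pow R)" using r by (auto simp: inj_on_def)
      show "sum ((\<lambda>K. Cw w K * Ww w (insert r R - K)) \<circ> insert r) (Pow R) = (\<Sum>S\<in>Pow R. X S * Ww w (R - S))"
        using r by (intro sum.cong refl) (auto simp: X_def intro!: arg_cong[where f = "Ww w"])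
    qed
    finally show ?thesis .
  qed
  have E2: "Ww w (insert r R) = (\<Sum>S\<in>Pow R. Y S * Ww w (R - S))"
  proof -
    have "Ww w (insert r R) = Ww w R * g R" unfolding g_def by (rule Ww_insert[OF fR r])
    also have "\<dots> = Pexp (\<lambda>K. Cw w K * g K) R" unfolding g_def
      by (simp add: Ww_Pexp fR Pexp_mult)
    also have "\<dots> = Pexp (\<lambda>K. c' K + Cw w K) R"
      by (simp add: c'_def algebra_simps)
    also have "\<dots> = (\<Sum>S\<in>Pow R. Pexp c' S * Pexp (Cw w) (R - S))"
      by (rule Pexp_add[OF fR])
    also have "\<dots> = (\<Sum>S\<in>Pow R. Y S * Ww w (R - S))"
      using fR by (intro sum.cong refl) (simp add: Y_def Ww_Pexp)
    finally show ?thesis .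
  qed
  have eqS: "X S = Y S" if "S \<in> Pow R - {R}" for S
    unfolding X_def Y_def c'_def g_def using that r by (intro psubset.IH) auto
  have "X R * Ww w (R - R) + (\<Sum>S\<in>Pow R - {R}. X S * Ww w (R - S)) =
        Y R * Ww w (R - R) + (\<Sum>S\<in>Pow R - {R}. Y S * Ww w (R - S))"
    using E1 E2 fR by (simp add: sum.remove[of "Pow R" R])
  moreover have "(\<Sum>S\<in>Pow R - {R}. X S * Ww w (R - S)) = (\<Sum>S\<in>Pow R - {R}. Y S * Ww w (R - S))"
    using eqS by simp
  ultimately have "X R = Y R" by simp
  then show ?case by (simp add: X_def Y_def c'_def g_def)
qed

lemma prod_sub1_bound:
  fixes z :: "nat \<Rightarrow> complex"
  shows "finite K \<Longrightarrow> (\<forall>u\<in>K. cmod (1 + z u) \<le> 1) \<Longrightarrow> cmod ((\<Prod>u\<in>K. 1 + z u) - 1) \<le> (\<Sum>u\<in>K. cmod (z u))"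
proof (induction K rule: finite_induct)
  case empty then show ?case by simp
next
  case (insert u K)
  let ?P = "\<Prod>u\<in>K. 1 + z u"
  have "(\<Prod>u\<in>insert u K. 1 + z u) - 1 = (1 + z u) * (?P - 1) + z u"
    using insert by (simp add: algebra_simps)
  then have "cmod ((\<Prod>u\<in>insert u K. 1 + z u) - 1) \<le> cmod (1 + z u) * cmod (?P - 1) + cmod (z u)"
    by (metis norm_mult norm_triangle_ineq)
  also have "\<dots> \<le> 1 * cmod (?P - 1) + cmod (z u)"
    using insert by (intro add_mono mult_right_mono) auto
  also have "\<dots> \<le> (\<Sum>u\<in>K. cmod (z u)) + cmod (z u)" using insert by simp
  finally show ?case using insert by (simp add: add.commute)
qed

lemma Lp_norm:
  fixes c :: "nat set \<Rightarrow> complex" and d :: "nat set \<Rightarrow> real"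
  shows "finite R \<Longrightarrow> (\<And>K. K \<subseteq> R \<Longrightarrow> cmod (c K) \<le> d K) \<Longrightarrow> cmod (Lp c l R) \<le> Lp d l R"
proof (induction l arbitrary: R)
  case 0 then show ?case by simp
next
  case (Suc l)
  have "cmod (Lp c (Suc l) R) \<le> (\<Sum>K\<in>{K. K \<subseteq> R \<and> K \<noteq> {}}. cmod (c K * Lp c l (R - K)))"
    by (simp add: sum_norm_le)
  also have "\<dots> \<le> (\<Sum>K\<in>{K. K \<subseteq> R \<and> K \<noteq> {}}. d K * Lp d l (R - K))"
  proof (rule sum_mono)
    fix K assume K: "K \<in> {K. K \<subseteq> R \<and> K \<noteq> {}}"
    have 1: "cmod (Lp c l (R - K)) \<le> Lp d l (R - K)"
      using Suc.prems K by (intro Suc.IH) auto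
    have 2: "cmod (c K) \<le> d K" using Suc.prems K by auto
    have 3: "0 \<le> d K" using 2 norm_ge_zero[of "c K"] by linarith
      show "cmod (c K * Lp c l (R - K)) \<le> d K * Lp d l (R - K)"
      unfolding norm_mult by (rule mult_mono[OF 2 1]) (use 3 in auto)
  qed
  finally show ?case by simp
qed

lemma Pexp_norm:
  fixes c :: "nat set \<Rightarrow> complex" and d :: "nat set \<Rightarrow> real"
  assumes "finite R" "\<And>K. K \<subseteq> R \<Longrightarrow> cmod (c K) \<le> d K"
  shows "cmod (Pexp c R) \<le> Pexp d R"
proof -
  have "cmod (Pexp c R) \<le> (\<Sum>l\<le>card R. cmod (Lp c l R / fact l))"
    unfolding Pexp_def by (rule norm_sum)
  also have "\<dots> \<le> (\<Sum>l\<le>card R. Lp d l R / fact l)"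
  proof (rule sum_mono)
    fix l
    have "cmod (Lp c l R / fact l) = cmod (Lp c l R) / fact l"
      by (simp add: norm_divide)
    also have "\<dots> \<le> Lp d l R / fact l"
      using Lp_norm[OF assms] by (simp add: divide_right_mono)
    finally show "cmod (Lp c l R / fact l) \<le> Lp d l R / fact l" .
  qed
  finally show ?thesis by (simp add: Pexp_def)
qed


definition mapg :: "(nat \<Rightarrow> nat) \<Rightarrow> (nat \<times> nat) set \<Rightarrow> (nat \<times> nat) set" where
  "mapg f G = (\<lambda>p. ed (f (fst p)) (f (snd p))) ` G"

lemma ed_sym: "ed a b = ed b a"
  by (auto simp: ed_def min_def max_def)

lemma ed_fst_snd: "ed (h (fst (ed a b))) (h (snd (ed a b))) = ed (h a) (h b)"
  by (cases "a \<le> b") (auto simp: ed_def min_def max_def)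

lemma ed_edge: "i < j \<Longrightarrow> ed i j = (i, j)"
  by (simp add: ed_def)

lemma mapg_comp: "mapg g (mapg f G) = mapg (g \<circ> f) G"
  unfolding mapg_def image_image by (simp add: ed_fst_snd)

lemma mapg_id: "(\<And>a. a \<in> V \<Longrightarrow> h a = a) \<Longrightarrow> G \<subseteq> edges V \<Longrightarrow> mapg h G = G"
proof -
  assume h: "\<And>a. a \<in> V \<Longrightarrow> h a = a" and G: "G \<subseteq> edges V"
  have "(\<lambda>p. ed (h (fst p)) (h (snd p))) ` G = (\<lambda>p. p) ` G"
  proof (rule image_cong[OF refl])
    fix p assume "p \<in> G"
    then obtain i j where "p = (i, j)" "i < j" "i \<in> V" "j \<in> V" using G by (auto simp: edges_def)
    then show "ed (h (fst p)) (h (snd p)) = p" using h by (simp add: ed_edge)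
  qed
  then show ?thesis by (simp add: mapg_def)
qed

lemma mapg_edges:
  assumes "inj_on f I" "G \<subseteq> edges I"
  shows "mapg f G \<subseteq> edges (f ` I)"
proof
  fix e assume "e \<in> mapg f G"
  then obtain i j where e: "e = ed (f i) (f j)" and ij: "(i, j) \<in> G" by (auto simp: mapg_def)
  then have "i < j" "i \<in> I" "j \<in> I" using assms(2) by (auto simp: edges_def)
  then have "f i \<noteq> f j" using assms(1) by (metis inj_onD less_irrefl)
  then have "min (f i) (f j) < max (f i) (f j)" by (simp add: min_def max_def)
  moreover have "min (f i) (f j) \<in> f ` I" "max (f i) (f j) \<in> f ` I"
    using \<open>i \<in> I\<close> \<open>j \<in> I\<close> by (simp_all add: min_def max_def)
  ultimately show "e \<in> edges (f ` I)" using e by (simp add: edges_def ed_def)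
qed

lemma mapg_reach:
  assumes "(i, j) \<in> (G \<union> G\<inverse>)\<^sup>*"
  shows "(f i, f j) \<in> (mapg f G \<union> (mapg f G)\<inverse>)\<^sup>*"
  using assms
proof (induction rule: rtrancl_induct)
  case base then show ?case by simp
next
  case (step y z)
  have "ed (f y) (f z) \<in> mapg f G"
  proof (cases "(y, z) \<in> G")
    case True
    then show ?thesis by (force simp: mapg_def)
  next
    case False
    then have "(z, y) \<in> G" using step(2) by auto
    then have "ed (f z) (f y) \<in> mapg f G" by (force simp: mapg_def)
    then show ?thesis by (simp add: ed_sym)
  qed
  then have "(f y, f z) \<in> mapg f G \<union> (mapg f G)\<inverse>"
    by (cases "f y \<le> f z") (auto simp: ed_def min_def max_def)
  with step(3) show ?case by (rule rtrancl_into_rtrancl)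
qed

lemma mapg_conn:
  assumes "inj_on f I" "conn I G"
  shows "conn (f ` I) (mapg f G)"
  unfolding conn_def
proof (intro conjI ballI)
  show "mapg f G \<subseteq> edges (f ` I)" using assms by (intro mapg_edges) (auto simp: conn_def)
  fix a b assume "a \<in> f ` I" "b \<in> f ` I"
  then obtain i j where ij: "a = f i" "b = f j" "i \<in> I" "j \<in> I" by blast
  then have "(i, j) \<in> (G \<union> G\<inverse>)\<^sup>*" using assms(2) by (simp add: conn_def)
  then show "(a, b) \<in> (mapg f G \<union> (mapg f G)\<inverse>)\<^sup>*" unfolding ij by (rule mapg_reach)
qed

lemma Cw_relabel:
  fixes W :: "nat \<Rightarrow> nat \<Rightarrow> 'b::comm_ring_1"
  assumes inj: "inj_on f I" and sym: "\<And>a b. a \<in> f ` I \<Longrightarrow> b \<in> f ` I \<Longrightarrow> W a b = W b a"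
  shows "Cw (\<lambda>p. W (fst p) (snd p)) (f ` I) = Cw (\<lambda>p. W (f (fst p)) (f (snd p))) I"
proof -
  define g where "g = the_inv_into I f"
  have gf: "\<And>i. i \<in> I \<Longrightarrow> g (f i) = i" unfolding g_def using inj by (rule the_inv_into_f_f)
  have fg: "\<And>a. a \<in> f ` I \<Longrightarrow> f (g a) = a" unfolding g_def using inj by (auto simp: the_inv_into_f_f)
  have injg: "inj_on g (f ` I)" by (rule inj_on_inverseI[where g = f]) (use fg in auto)
  have gI: "g ` f ` I = I" by (simp add: image_image gf cong: image_cong)
  show ?thesis unfolding Cw_def
  proof (rule sum.reindex_bij_witness[where i = "mapg f" and j = "mapg g"])
    fix G assume G: "G \<in> {G. conn (f ` I) G}"
    then have Ge: "G \<subseteq> edges (f ` I)" by (simp add: conn_def)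
    show "mapg f (mapg g G) = G" unfolding mapg_comp using fg Ge by (intro mapg_id) auto
    have "conn (g ` f ` I) (mapg g G)" by (rule mapg_conn[OF injg]) (use G in simp)
    then show "mapg g G \<in> {G. conn I G}" by (simp only: gI mem_Collect_eq)
    have injG: "inj_on (\<lambda>p. ed (f (fst p)) (f (snd p))) (mapg g G)"
    proof (rule inj_on_inverseI[where g = "\<lambda>p. ed (g (fst p)) (g (snd p))"])
      fix p assume "p \<in> mapg g G"
      then have p: "p \<in> edges I" using mapg_edges[OF injg Ge] by (simp only: gI subset_iff)
      then obtain i j where "p = (i, j)" "i < j" "i \<in> I" "j \<in> I" unfolding edges_def by blast
      then show "ed (g (fst (ed (f (fst p)) (f (snd p))))) (g (snd (ed (f (fst p)) (f (snd p))))) = p"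
        using gf by (simp add: ed_fst_snd ed_edge)
    qed
    have "(\<Prod>p\<in>mapg f (mapg g G). W (fst p) (snd p)) = (\<Prod>p\<in>mapg g G. W (fst (ed (f (fst p)) (f (snd p)))) (snd (ed (f (fst p)) (f (snd p)))))"
      unfolding mapg_def[of f] by (subst prod.reindex[OF injG]) (simp add: comp_def)
    also have "\<dots> = (\<Prod>p\<in>mapg g G. W (f (fst p)) (f (snd p)))"
    proof (rule prod.cong[OF refl])
      fix p assume "p \<in> mapg g G"
      then have p: "p \<in> edges I" using mapg_edges[OF injg Ge] by (simp only: gI subset_iff)
      then have a: "f (fst p) \<in> f ` I" and b: "f (snd p) \<in> f ` I" unfolding edges_def by auto
      show "W (fst (ed (f (fst p)) (f (snd p)))) (snd (ed (f (fst p)) (f (snd p)))) = W (f (fst p)) (f (snd p))"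
      proof (cases "f (fst p) \<le> f (snd p)")
        case True then show ?thesis by (simp add: ed_def)
      next
        case False then show ?thesis using sym[OF b a] by (simp add: ed_def)
      qed
    qed
    finally show "(\<Prod>p\<in>mapg g G. W (f (fst p)) (f (snd p))) = (\<Prod>p\<in>G. W (fst p) (snd p))"
      using \<open>mapg f (mapg g G) = G\<close> by simp
  next
    fix G assume G: "G \<in> {G. conn I G}"
    then have Ge: "G \<subseteq> edges I" by (simp add: conn_def)
    show "mapg g (mapg f G) = G" unfolding mapg_comp using gf Ge by (intro mapg_id) auto
    have "conn (f ` I) (mapg f G)" by (rule mapg_conn[OF inj]) (use G in simp)
    then show "mapg f G \<in> {G. conn (f ` I) G}" by simp
  qed
qed

lemma Cw_cong: "(\<And>e. e \<in> edges K \<Longrightarrow> w e = w' e) \<Longrightarrow> Cw w K = Cw w' K"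
  unfolding Cw_def conn_def by (intro sum.cong refl prod.cong) auto

lemma Lp_nonneg: "(\<And>K. 0 \<le> c K) \<Longrightarrow> 0 \<le> Lp (c :: nat set \<Rightarrow> real) l R"
  by (induction l arbitrary: R) (auto intro!: sum_nonneg)

lemma Lp_cong: "(\<And>K. K \<subseteq> R \<Longrightarrow> c K = c' K) \<Longrightarrow> Lp c l R = Lp c' l R"
proof (induction l arbitrary: R)
  case (Suc l)
  have "Lp c l (R - K) = Lp c' l (R - K)" if "K \<subseteq> R" for K
    using Suc.prems by (intro Suc.IH) auto
  then show ?case using Suc.prems by (auto intro!: sum.cong)
qed simp


locale KPs =
  fixes M :: "'a measure" and \<zeta> :: "'a \<Rightarrow> 'a \<Rightarrow> complex"
  assumes fin: "finite_measure M"
    and zeta_meas: "(\<lambda>p. \<zeta> (fst p) (snd p)) \<in> borel_measurable (M \<Otimes>\<^sub>M M)"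
    and zeta_sym: "\<And>x y. x \<in> space M \<Longrightarrow> y \<in> space M \<Longrightarrow> \<zeta> x y = \<zeta> y x"
    and zeta_bound: "\<And>x y. x \<in> space M \<Longrightarrow> y \<in> space M \<Longrightarrow> cmod (1 + \<zeta> x y) \<le> 1"
begin

sublocale PS: product_sigma_finite "\<lambda>_::nat. M"
  unfolding product_sigma_finite_def using fin by (simp add: finite_measure_def)

abbreviation PM :: "nat set \<Rightarrow> (nat \<Rightarrow> 'a) measure" where "PM J \<equiv> PiM J (\<lambda>_. M)"

definition Cg :: "nat set \<Rightarrow> (nat \<Rightarrow> 'a) \<Rightarrow> complex" where
  "Cg K x = Cw (\<lambda>p. \<zeta> (x (fst p)) (x (snd p))) K"

definition T :: "nat set \<Rightarrow> 'a \<Rightarrow> ennreal" where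
  "T K y = (\<integral>\<^sup>+x. ennreal ((\<Sum>i\<in>K. cmod (\<zeta> y (x i))) * cmod (Cg K x)) \<partial>PM K)"

definition cc :: "'a \<Rightarrow> (nat \<Rightarrow> 'a) \<Rightarrow> nat set \<Rightarrow> real" where
  "cc y x K = cmod (Cg K x) * (\<Sum>u\<in>K. cmod (\<zeta> y (x u)))"

lemma meas_zeta2:
  assumes "i \<in> J" "j \<in> J"
  shows "(\<lambda>x. \<zeta> (x i) (x j)) \<in> borel_measurable (PM J)"
proof -
  have "(\<lambda>x. (x i, x j)) \<in> measurable (PM J) (M \<Otimes>\<^sub>M M)"
    using assms by (intro measurable_Pair) (auto intro: measurable_component_singleton)
  from measurable_compose[OF this zeta_meas] show ?thesis by simp
qed

lemma meas_zeta1M: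
  assumes "y \<in> space M"
  shows "(\<lambda>z. \<zeta> y z) \<in> borel_measurable M"
  using measurable_Pair2[OF zeta_meas assms] by simp

lemma meas_zeta1:
  assumes "y \<in> space M" "i \<in> J"
  shows "(\<lambda>x. \<zeta> y (x i)) \<in> borel_measurable (PM J)"
  using measurable_compose[OF measurable_component_singleton[OF assms(2)] meas_zeta1M[OF assms(1)]] .

lemma meas_Cg:
  assumes "K \<subseteq> J" "finite K"
  shows "(\<lambda>x. Cg K x) \<in> borel_measurable (PM J)"
  unfolding Cg_def Cw_def
proof (intro borel_measurable_sum borel_measurable_prod)
  fix G e assume "G \<in> {G. conn K G}" "e \<in> G"
  then have "fst e \<in> J" "snd e \<in> J" using assms by (cases e, auto simp: conn_def edges_def)+
  then show "(\<lambda>x. \<zeta> (x (fst e)) (x (snd e))) \<in> borel_measurable (PM J)" by (rule meas_zeta2)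
qed

lemma meas_cc:
  assumes "K \<subseteq> J" "finite K" "y \<in> space M"
  shows "(\<lambda>x. cc y x K) \<in> borel_measurable (PM J)"
  unfolding cc_def
proof (intro borel_measurable_times borel_measurable_sum)
  show "(\<lambda>x. cmod (Cg K x)) \<in> borel_measurable (PM J)"
    using meas_Cg[OF assms(1,2)] by measurable
  fix u assume "u \<in> K"
  then have "u \<in> J" using assms(1) by auto
  then show "(\<lambda>x. cmod (\<zeta> y (x u))) \<in> borel_measurable (PM J)"
    using meas_zeta1[OF assms(3)] by measurable
qed

lemma meas_Lp:
  assumes "R \<subseteq> J" "finite R" "y \<in> space M"
  shows "(\<lambda>x. Lp (cc y x) l R) \<in> borel_measurable (PM J)"
  using assms(1,2)
proof (induction l arbitrary: R)
  case 0 then show ?case by simp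
next
  case (Suc l)
  show ?case unfolding Lp.simps
  proof (intro borel_measurable_sum borel_measurable_times)
    fix K assume K: "K \<in> {K. K \<subseteq> R \<and> K \<noteq> {}}"
    show "(\<lambda>x. cc y x K) \<in> borel_measurable (PM J)"
      using K Suc.prems assms(3) by (intro meas_cc) (auto intro: finite_subset)
    show "(\<lambda>x. Lp (cc y x) l (R - K)) \<in> borel_measurable (PM J)"
      using Suc.prems by (intro Suc.IH) auto
  qed
qed

lemma Cg_local: "(\<And>i. i \<in> K \<Longrightarrow> x i = x' i) \<Longrightarrow> Cg K x = Cg K x'"
  unfolding Cg_def by (rule Cw_cong) (auto simp: edges_def)

lemma cc_local: "(\<And>i. i \<in> K \<Longrightarrow> x i = x' i) \<Longrightarrow> cc y x K = cc y x' K"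
  unfolding cc_def using Cg_local[of K x x'] by simp

lemma Lp_local: "(\<And>i. i \<in> R \<Longrightarrow> x i = x' i) \<Longrightarrow> Lp (cc y x) l R = Lp (cc y x') l R"
  by (rule Lp_cong) (rule cc_local, auto)

lemma cc_nonneg: "0 \<le> cc y x K"
  unfolding cc_def by (auto intro!: mult_nonneg_nonneg sum_nonneg)

lemma PM_reindex:
  assumes bij: "bij_betw f I K" and fI: "finite I"
  shows "distr (PM I) (PM K) (\<lambda>x. \<lambda>k\<in>K. x (the_inv_into I f k)) = PM K"
proof -
  define g where "g = the_inv_into I f"
  have inj: "inj_on f I" and fIK: "f ` I = K" using bij by (auto simp: bij_betw_def)
  have fK: "finite K" using fI fIK by auto
  have gf: "\<And>i. i \<in> I \<Longrightarrow> g (f i) = i" unfolding g_def using inj by (rule the_inv_into_f_f)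
  have fg: "\<And>k. k \<in> K \<Longrightarrow> f (g k) = k" unfolding g_def using inj fIK by (auto simp: the_inv_into_f_f)
  have gK: "\<And>k. k \<in> K \<Longrightarrow> g k \<in> I" using gf fIK by auto
  have meas: "(\<lambda>x. \<lambda>k\<in>K. x (g k)) \<in> measurable (PM I) (PM K)"
    by (intro measurable_restrict measurable_component_singleton gK)
  show ?thesis unfolding g_def[symmetric]
  proof (rule PS.PiM_eqI[OF fK])
    show "sets (distr (PM I) (PM K) (\<lambda>x. \<lambda>k\<in>K. x (g k))) = sets (PM K)" by simp
    fix A assume A: "\<And>i. i \<in> K \<Longrightarrow> A i \<in> sets M"
    have pre: "(\<lambda>x. \<lambda>k\<in>K. x (g k)) -` Pi\<^sub>E K A \<inter> space (PM I) = Pi\<^sub>E I (\<lambda>i. A (f i))"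
    proof (intro set_eqI iffI)
      fix x assume x: "x \<in> (\<lambda>x. \<lambda>k\<in>K. x (g k)) -` Pi\<^sub>E K A \<inter> space (PM I)"
      then have x1: "(\<lambda>k\<in>K. x (g k)) \<in> Pi\<^sub>E K A" and x2: "x \<in> Pi\<^sub>E I (\<lambda>_. space M)"
        by (auto simp: space_PiM)
      show "x \<in> Pi\<^sub>E I (\<lambda>i. A (f i))"
      proof (rule PiE_I)
        fix i assume i: "i \<in> I"
        then have fi: "f i \<in> K" using fIK by auto
        have "(\<lambda>k\<in>K. x (g k)) (f i) \<in> A (f i)" by (rule PiE_mem[OF x1 fi])
        then show "x i \<in> A (f i)" using gf[OF i] fi by simp
      next
        fix i assume "i \<notin> I" then show "x i = undefined" by (rule PiE_arb[OF x2])
      qed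
    next
      fix x assume x: "x \<in> Pi\<^sub>E I (\<lambda>i. A (f i))"
      have "Pi\<^sub>E I (\<lambda>i. A (f i)) \<subseteq> Pi\<^sub>E I (\<lambda>_. space M)"
      proof (rule PiE_mono)
        fix i assume "i \<in> I"
        then have "A (f i) \<in> sets M" using A fIK by auto
        then show "A (f i) \<subseteq> space M" by (rule sets.sets_into_space)
      qed
      then have "x \<in> space (PM I)" using x by (auto simp: space_PiM)
      moreover have "(\<lambda>k\<in>K. x (g k)) \<in> Pi\<^sub>E K A"
        unfolding restrict_PiE_iff
      proof
        fix k assume k: "k \<in> K"
        have "x (g k) \<in> A (f (g k))" by (rule PiE_mem[OF x gK[OF k]])
        then show "x (g k) \<in> A k" using fg[OF k] by simp
      qed
      ultimately show "x \<in> (\<lambda>x. \<lambda>k\<in>K. x (g k)) -` Pi\<^sub>E K A \<inter> space (PM I)" by simp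
    qed
    have "emeasure (distr (PM I) (PM K) (\<lambda>x. \<lambda>k\<in>K. x (g k))) (Pi\<^sub>E K A) =
        emeasure (PM I) (Pi\<^sub>E I (\<lambda>i. A (f i)))"
      using A meas by (subst emeasure_distr) (auto simp: pre intro!: sets_PiM_I_finite fK)
    also have "\<dots> = (\<Prod>i\<in>I. emeasure M (A (f i)))"
      using A fIK fI by (subst PS.emeasure_PiM) auto
    also have "\<dots> = (\<Prod>k\<in>K. emeasure M (A k))"
      using bij by (rule prod.reindex_bij_betw)
    finally show "emeasure (distr (PM I) (PM K) (\<lambda>x. \<lambda>k\<in>K. x (g k))) (Pi\<^sub>E K A) = (\<Prod>k\<in>K. emeasure M (A k))" .
  qed
qed

lemma T_relabel:
  assumes fK: "finite K" and y: "y \<in> space M"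
  shows "T K y = T {..<card K} y"
proof -
  obtain f where bij: "bij_betw f {..<card K} K" using ex_bij_betw_nat_finite[OF fK] by (auto simp: atLeast0LessThan)
  define I where "I = {..<card K}"
  define g where "g = the_inv_into I f"
  have bij': "bij_betw f I K" using bij by (simp add: I_def)
  have inj: "inj_on f I" and fIK: "f ` I = K" using bij' by (auto simp: bij_betw_def)
  have gf: "\<And>i. i \<in> I \<Longrightarrow> g (f i) = i" unfolding g_def using inj by (rule the_inv_into_f_f)
  have gK: "\<And>k. k \<in> K \<Longrightarrow> g k \<in> I" using gf fIK by auto
  define F where "F = (\<lambda>x. ennreal ((\<Sum>i\<in>K. cmod (\<zeta> y (x i))) * cmod (Cg K x)))"
  have Fm: "F \<in> borel_measurable (PM K)" unfolding F_def
    using meas_Cg[of K K] meas_zeta1[OF y] fK by measurable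
  have meas: "(\<lambda>x. \<lambda>k\<in>K. x (g k)) \<in> measurable (PM I) (PM K)"
    by (intro measurable_restrict measurable_component_singleton gK)
  have "T K y = integral\<^sup>N (PM K) F" by (simp add: T_def F_def)
  also have "\<dots> = integral\<^sup>N (distr (PM I) (PM K) (\<lambda>x. \<lambda>k\<in>K. x (g k))) F"
    using PM_reindex[OF bij'] by (simp add: g_def I_def)
  also have "\<dots> = (\<integral>\<^sup>+x. F (\<lambda>k\<in>K. x (g k)) \<partial>PM I)"
    by (rule nn_integral_distr[OF meas]) (simp add: Fm)
  also have "\<dots> = (\<integral>\<^sup>+x. ennreal ((\<Sum>i\<in>I. cmod (\<zeta> y (x i))) * cmod (Cg I x)) \<partial>PM I)"
  proof (rule nn_integral_cong)
    fix x assume x: "x \<in> space (PM I)"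
    let ?x = "\<lambda>k\<in>K. x (g k)"
    have 1: "(\<Sum>k\<in>K. cmod (\<zeta> y (?x k))) = (\<Sum>i\<in>I. cmod (\<zeta> y (x i)))"
    proof -
      have "(\<Sum>i\<in>I. cmod (\<zeta> y (x i))) = (\<Sum>i\<in>I. cmod (\<zeta> y (?x (f i))))"
        using gf fIK by (intro sum.cong refl) auto
      also have "\<dots> = (\<Sum>k\<in>K. cmod (\<zeta> y (?x k)))"
        using bij' by (rule sum.reindex_bij_betw)
      finally show ?thesis by simp
    qed
    have 2: "Cg K ?x = Cg I x"
    proof -
      have "Cg K ?x = Cw (\<lambda>p. \<zeta> (?x (fst p)) (?x (snd p))) (f ` I)" by (simp add: Cg_def fIK)
      also have "\<dots> = Cw (\<lambda>p. \<zeta> (?x (f (fst p))) (?x (f (snd p)))) I"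
      proof (rule Cw_relabel[OF inj])
        fix a b assume "a \<in> f ` I" "b \<in> f ` I"
        then have "?x a \<in> space M" "?x b \<in> space M" using x gK fIK by (auto simp: space_PiM PiE_def Pi_def)
        then show "\<zeta> (?x a) (?x b) = \<zeta> (?x b) (?x a)" by (rule zeta_sym)
      qed
      also have "\<dots> = Cg I x" unfolding Cg_def
      proof (rule Cw_cong)
        fix e assume "e \<in> edges I"
        then have a: "fst e \<in> I" and b: "snd e \<in> I" by (auto simp: edges_def)
        then have "f (fst e) \<in> K" "f (snd e) \<in> K" using fIK by auto
        then show "\<zeta> (?x (f (fst e))) (?x (f (snd e))) = \<zeta> (x (fst e)) (x (snd e))"
          using gf[OF a] gf[OF b] by simp
      qed
      finally show ?thesis .
    qed
    show "F ?x = ennreal ((\<Sum>i\<in>I. cmod (\<zeta> y (x i))) * cmod (Cg I x))"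
      using 1 2 by (simp add: F_def)
  qed
  also have "\<dots> = T {..<card K} y" by (simp add: T_def I_def)
  finally show ?thesis .
qed

end


fun lam :: "(nat \<Rightarrow> ennreal) \<Rightarrow> nat \<Rightarrow> nat \<Rightarrow> ennreal" where
  "lam tt 0 m = (if m = 0 then 1 else 0)"
| "lam tt (Suc l) m = (\<Sum>k\<in>{1..m}. tt k * lam tt l (m - k))"

lemma sum_tri_le:
  fixes f :: "nat \<Rightarrow> nat \<Rightarrow> ennreal"
  shows "(\<Sum>m\<le>N. \<Sum>k\<in>{1..m}. f k (m - k)) \<le> (\<Sum>k\<in>{1..N}. \<Sum>j\<le>N. f k j)"
proof -
  let ?S = "SIGMA m:{..N}. {1..m}"
  have "(\<Sum>m\<le>N. \<Sum>k\<in>{1..m}. f k (m - k)) = (\<Sum>(m, k)\<in>?S. f k (m - k))"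
    by (rule sum.Sigma) auto
  also have "\<dots> = (\<Sum>p\<in>(\<lambda>(m, k). (k, m - k)) ` ?S. f (fst p) (snd p))"
  proof (subst sum.reindex)
    show "inj_on (\<lambda>(m, k). (k, m - k)) ?S" by (auto simp: inj_on_def)
  qed (auto intro!: sum.cong)
  also have "\<dots> \<le> (\<Sum>p\<in>{1..N} \<times> {..N}. f (fst p) (snd p))"
    by (rule sum_mono2) auto
  also have "\<dots> = (\<Sum>k\<in>{1..N}. \<Sum>j\<le>N. f k j)"
    by (simp add: sum.cartesian_product case_prod_unfold)
  finally show ?thesis .
qed

lemma lam_sum_le: "(\<Sum>m\<le>N. lam tt l m) \<le> (\<Sum>k\<in>{1..N}. tt k) ^ l"
proof (induction l)
  case 0
  have "(\<Sum>m\<le>N. lam tt 0 m) = (\<Sum>m\<le>N. if m = 0 then 1 else 0)" by simp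
  also have "\<dots> = 1" by (subst sum.delta) auto
  finally show ?case by simp
next
  case (Suc l)
  have "(\<Sum>m\<le>N. lam tt (Suc l) m) \<le> (\<Sum>k\<in>{1..N}. \<Sum>j\<le>N. tt k * lam tt l j)"
    unfolding lam.simps by (rule sum_tri_le)
  also have "\<dots> = (\<Sum>k\<in>{1..N}. tt k) * (\<Sum>j\<le>N. lam tt l j)"
    by (simp add: sum_product)
  also have "\<dots> \<le> (\<Sum>k\<in>{1..N}. tt k) * (\<Sum>k\<in>{1..N}. tt k) ^ l"
    by (intro mult_left_mono Suc.IH) auto
  finally show ?case by simp
qed

lemma exp_partial_le: "0 \<le> (A::real) \<Longrightarrow> (\<Sum>l\<le>N. A ^ l / fact l) \<le> exp A"
proof -
  assume A: "0 \<le> A"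
  have "(\<lambda>n. A ^ n /\<^sub>R fact n) sums exp A" by (rule exp_converges)
  then have s: "(\<lambda>n. A ^ n / fact n) sums exp A" by (simp add: divide_inverse_commute scaleR_conv_of_real)
  have "(\<Sum>l\<le>N. A ^ l / fact l) \<le> (\<Sum>n. A ^ n / fact n)"
    by (rule sum_le_suminf) (use s A in \<open>auto simp: sums_iff\<close>)
  then show ?thesis using s by (simp add: sums_iff)
qed

lemma Q_bound:
  assumes S: "(\<Sum>k\<in>{1..N}. tt k) \<le> ennreal A" and A: "0 \<le> A"
  shows "(\<Sum>m\<le>N. \<Sum>l\<le>m. lam tt l m * ennreal (1 / fact l)) \<le> ennreal (exp A)"
proof -
  have "(\<Sum>m\<le>N. \<Sum>l\<le>m. lam tt l m * ennreal (1 / fact l)) \<le> (\<Sum>m\<le>N. \<Sum>l\<le>N. lam tt l m * ennreal (1 / fact l))"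
    by (intro sum_mono sum_mono2) auto
  also have "\<dots> = (\<Sum>l\<le>N. (\<Sum>m\<le>N. lam tt l m) * ennreal (1 / fact l))"
    by (subst sum.swap) (simp add: sum_distrib_right)
  also have "\<dots> \<le> (\<Sum>l\<le>N. ennreal A ^ l * ennreal (1 / fact l))"
  proof (rule sum_mono)
    fix l
    have "(\<Sum>m\<le>N. lam tt l m) \<le> (\<Sum>k\<in>{1..N}. tt k) ^ l" by (rule lam_sum_le)
    also have "\<dots> \<le> ennreal A ^ l" using S by (intro power_mono) auto
    finally show "(\<Sum>m\<le>N. lam tt l m) * ennreal (1 / fact l) \<le> ennreal A ^ l * ennreal (1 / fact l)"
      by (rule mult_right_mono) auto
  qed
  also have "\<dots> = ennreal (\<Sum>l\<le>N. A ^ l / fact l)"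
  proof -
    have "ennreal A ^ l * ennreal (1 / fact l) = ennreal (A ^ l / fact l)" for l
    proof -
      have "ennreal (A ^ l / fact l) = ennreal (A ^ l * (1 / fact l))" by simp
      also have "\<dots> = ennreal (A ^ l) * ennreal (1 / fact l)" by (rule ennreal_mult'') simp
      also have "ennreal (A ^ l) = ennreal A ^ l" using A by (rule ennreal_power[symmetric])
      finally show ?thesis by simp
    qed
    then have "(\<Sum>l\<le>N. ennreal A ^ l * ennreal (1 / fact l)) = (\<Sum>l\<le>N. ennreal (A ^ l / fact l))" by simp
    also have "\<dots> = ennreal (\<Sum>l\<le>N. A ^ l / fact l)" using A by (intro sum_ennreal) auto
    finally show ?thesis .
  qed
  also have "\<dots> \<le> ennreal (exp A)"
    using exp_partial_le[OF A] by (rule ennreal_leI)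
  finally show ?thesis .
qed

lemma group_card:
  fixes h :: "nat \<Rightarrow> 'b::comm_semiring_1"
  assumes R: "finite R"
  shows "(\<Sum>K\<in>{K. K \<subseteq> R \<and> K \<noteq> {}}. h (card K)) = (\<Sum>k\<in>{1..card R}. of_nat (card R choose k) * h k)"
proof -
  let ?S = "{K. K \<subseteq> R \<and> K \<noteq> {}}"
  have fS: "finite ?S" using R by simp
  have img: "card ` ?S \<subseteq> {1..card R}"
  proof
    fix k assume "k \<in> card ` ?S"
    then obtain K where K: "K \<subseteq> R" "K \<noteq> {}" "k = card K" by auto
    then have "finite K" using R finite_subset by auto
    then show "k \<in> {1..card R}" using K R by (auto simp: card_mono Suc_le_eq card_gt_0_iff)
  qed
  have "(\<Sum>K\<in>?S. h (card K)) = (\<Sum>k\<in>{1..card R}. \<Sum>K\<in>{K \<in> ?S. card K = k}. h (card K))"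
    by (rule sum.group[OF fS _ img, symmetric]) simp
  also have "\<dots> = (\<Sum>k\<in>{1..card R}. of_nat (card R choose k) * h k)"
  proof (rule sum.cong[OF refl])
    fix k assume k: "k \<in> {1..card R}"
    have eq: "{K \<in> ?S. card K = k} = {K. K \<subseteq> R \<and> card K = k}" using k by auto
    have "(\<Sum>K\<in>{K \<in> ?S. card K = k}. h (card K)) = (\<Sum>K\<in>{K. K \<subseteq> R \<and> card K = k}. h k)"
      unfolding eq by simp
    also have "\<dots> = of_nat (card R choose k) * h k" using n_subsets[OF R, of k] by simp
    finally show "(\<Sum>K\<in>{K \<in> ?S. card K = k}. h (card K)) = of_nat (card R choose k) * h k" .
  qed
  finally show ?thesis .
qed


context KPs begin

definition t :: "nat \<Rightarrow> 'a \<Rightarrow> ennreal" where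
  "t k y = ennreal (1 / fact k) * T {..<k} y"

definition Q :: "nat \<Rightarrow> 'a \<Rightarrow> ennreal" where
  "Q m y = (\<Sum>l\<le>m. lam (\<lambda>k. t k y) l m * ennreal (1 / fact l))"

lemma fact_t: "ennreal (fact k) * t k y = T {..<k} y"
proof -
  have "ennreal (fact k) * ennreal (1 / fact k) = ennreal (fact k * (1 / fact k))"
    by (rule ennreal_mult[symmetric]) auto
  also have "\<dots> = 1" by simp
  finally show ?thesis unfolding t_def by (simp add: mult.assoc[symmetric])
qed

lemma meas_T:
  assumes fK: "finite K"
  shows "(\<lambda>y. T K y) \<in> borel_measurable M"
proof -
  interpret FP: finite_product_sigma_finite "\<lambda>_. M" K
    unfolding finite_product_sigma_finite_def finite_product_sigma_finite_axioms_def
    using PS.product_sigma_finite_axioms fK by simp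
  have z: "(\<lambda>p. \<zeta> (fst p) (snd p i)) \<in> borel_measurable (M \<Otimes>\<^sub>M PM K)" if "i \<in> K" for i
  proof -
    have "(\<lambda>p. (fst p, snd p i)) \<in> measurable (M \<Otimes>\<^sub>M PM K) (M \<Otimes>\<^sub>M M)"
      using that by (intro measurable_Pair measurable_fst measurable_compose[OF measurable_snd]
          measurable_component_singleton)
    from measurable_compose[OF this zeta_meas] show ?thesis by simp
  qed
  have c: "(\<lambda>p. Cg K (snd p)) \<in> borel_measurable (M \<Otimes>\<^sub>M PM K)"
    by (rule measurable_compose[OF measurable_snd meas_Cg]) (use fK in auto)
  have "(\<lambda>(y, x). ennreal ((\<Sum>i\<in>K. cmod (\<zeta> y (x i))) * cmod (Cg K x))) \<in> borel_measurable (M \<Otimes>\<^sub>M PM K)"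
    unfolding case_prod_beta using z c by measurable
  then show ?thesis unfolding T_def by (rule FP.borel_measurable_nn_integral)
qed

lemma meas_t: "(\<lambda>y. t k y) \<in> borel_measurable M"
  unfolding t_def using meas_T[of "{..<k}"] by measurable

lemma meas_lam: "(\<lambda>y. lam (\<lambda>k. t k y) l m) \<in> borel_measurable M"
proof (induction l arbitrary: m)
  case 0 then show ?case by simp
next
  case (Suc l)
  show ?case unfolding lam.simps using Suc.IH meas_t by measurable
qed

lemma meas_Q: "(\<lambda>y. Q m y) \<in> borel_measurable M"
  unfolding Q_def using meas_lam by measurable

lemma ccLp_nonneg: "0 \<le> cc y x K * Lp (cc y x) l R"
  by (intro mult_nonneg_nonneg cc_nonneg Lp_nonneg)

lemma split_K:
  assumes R: "finite R" and K: "K \<subseteq> R" and y: "y \<in> space M"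
  shows "(\<integral>\<^sup>+x. ennreal (cc y x K * Lp (cc y x) l (R - K)) \<partial>PM R)
       = T K y * (\<integral>\<^sup>+z. ennreal (Lp (cc y z) l (R - K)) \<partial>PM (R - K))"
proof -
  have KR: "K \<union> (R - K) = R" using K by auto
  have fK: "finite K" using R K finite_subset by auto
  have fJ: "finite (R - K)" using R by simp
  let ?f = "\<lambda>x. ennreal (cc y x K * Lp (cc y x) l (R - K))"
  have fm: "?f \<in> borel_measurable (PM (K \<union> (R - K)))" unfolding KR
    using meas_cc[OF K fK y] meas_Lp[where J=R and R="R - K", OF Diff_subset fJ y] by measurable
  have Lm: "(\<lambda>z. ennreal (Lp (cc y z) l (R - K))) \<in> borel_measurable (PM (R - K))"
    using meas_Lp[of "R - K" "R - K" y l] fJ y by measurable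
  have cm: "(\<lambda>u. ennreal (cc y u K)) \<in> borel_measurable (PM K)"
    using meas_cc[of K K y] fK y by measurable
  have "(\<integral>\<^sup>+x. ?f x \<partial>PM R) = (\<integral>\<^sup>+x. ?f x \<partial>PM (K \<union> (R - K)))" unfolding KR ..
  also have "\<dots> = (\<integral>\<^sup>+u. (\<integral>\<^sup>+v. ?f (merge K (R - K) (u, v)) \<partial>PM (R - K)) \<partial>PM K)"
    by (rule PS.product_nn_integral_fold[OF _ fK fJ fm]) auto
  also have "\<dots> = (\<integral>\<^sup>+u. (\<integral>\<^sup>+v. ennreal (cc y u K) * ennreal (Lp (cc y v) l (R - K)) \<partial>PM (R - K)) \<partial>PM K)"
  proof (intro nn_integral_cong)
    fix u v
    have 1: "cc y (merge K (R - K) (u, v)) K = cc y u K"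
      by (rule cc_local) (simp add: merge_def)
    have 2: "Lp (cc y (merge K (R - K) (u, v))) l (R - K) = Lp (cc y v) l (R - K)"
      by (rule Lp_local) (simp add: merge_def)
    show "?f (merge K (R - K) (u, v)) = ennreal (cc y u K) * ennreal (Lp (cc y v) l (R - K))"
      unfolding 1 2 by (rule ennreal_mult) (auto intro: cc_nonneg Lp_nonneg)
  qed
  also have "\<dots> = (\<integral>\<^sup>+u. ennreal (cc y u K) * (\<integral>\<^sup>+v. ennreal (Lp (cc y v) l (R - K)) \<partial>PM (R - K)) \<partial>PM K)"
    by (intro nn_integral_cong nn_integral_cmult Lm)
  also have "\<dots> = (\<integral>\<^sup>+u. ennreal (cc y u K) \<partial>PM K) * (\<integral>\<^sup>+v. ennreal (Lp (cc y v) l (R - K)) \<partial>PM (R - K))"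
    by (rule nn_integral_multc[OF cm])
  also have "(\<integral>\<^sup>+u. ennreal (cc y u K) \<partial>PM K) = T K y"
    unfolding T_def cc_def by (simp add: mult.commute)
  finally show ?thesis .
qed


lemma binom_fact_ennreal:
  assumes "k \<le> m"
  shows "of_nat (m choose k) * (ennreal (fact k) * ennreal (fact (m - k))) = ennreal (fact m)"
proof -
  have "real (m choose k) = fact m / (fact k * fact (m - k))" using assms by (rule binomial_fact)
  then have "real (m choose k) * (fact k * fact (m - k)) = fact m" by (simp add: field_simps)
  then have "ennreal (real (m choose k) * (fact k * fact (m - k))) = ennreal (fact m)" by simp
  then show ?thesis by (simp add: ennreal_mult ennreal_of_nat_eq_real_of_nat)
qed

lemma Lp_integral:
  assumes "finite R" and y: "y \<in> space M"
  shows "(\<integral>\<^sup>+x. ennreal (Lp (cc y x) l R) \<partial>PM R) = ennreal (fact (card R)) * lam (\<lambda>k. t k y) l (card R)"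
  using assms(1)
proof (induction l arbitrary: R)
  case 0
  show ?case
  proof (cases "R = {}")
    case True then show ?thesis by (simp add: PiM_empty emeasure_count_space_finite)
  next
    case False then show ?thesis using 0 by simp
  qed
next
  case (Suc l)
  note fR = Suc.prems
  let ?KS = "{K. K \<subseteq> R \<and> K \<noteq> {}}"
  let ?m = "card R"
  define h where "h k = ennreal (fact k) * t k y * (ennreal (fact (?m - k)) * lam (\<lambda>k. t k y) l (?m - k))" for k
  have "(\<integral>\<^sup>+x. ennreal (Lp (cc y x) (Suc l) R) \<partial>PM R) =
      (\<integral>\<^sup>+x. (\<Sum>K\<in>?KS. ennreal (cc y x K * Lp (cc y x) l (R - K))) \<partial>PM R)"
    by (rule nn_integral_cong) (simp add: ccLp_nonneg sum_nonneg)
  also have "\<dots> = (\<Sum>K\<in>?KS. \<integral>\<^sup>+x. ennreal (cc y x K * Lp (cc y x) l (R - K)) \<partial>PM R)"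
  proof (rule nn_integral_sum)
    fix K assume K: "K \<in> ?KS"
    then have fK: "finite K" and KR: "K \<subseteq> R" using fR finite_subset by auto
    have m1: "(\<lambda>x. Lp (cc y x) l (R - K)) \<in> borel_measurable (PM R)" by (rule meas_Lp) (use fR y in auto)
    have m2: "(\<lambda>x. cc y x K) \<in> borel_measurable (PM R)" by (rule meas_cc[OF KR fK y])
    show "(\<lambda>x. ennreal (cc y x K * Lp (cc y x) l (R - K))) \<in> borel_measurable (PM R)"
      using m1 m2 by measurable
  qed
  also have "\<dots> = (\<Sum>K\<in>?KS. h (card K))"
  proof (rule sum.cong[OF refl])
    fix K assume K: "K \<in> ?KS"
    then have fK: "finite K" and KR: "K \<subseteq> R" using fR finite_subset by auto
    have "(\<integral>\<^sup>+x. ennreal (cc y x K * Lp (cc y x) l (R - K)) \<partial>PM R)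
        = T K y * (\<integral>\<^sup>+z. ennreal (Lp (cc y z) l (R - K)) \<partial>PM (R - K))"
      by (rule split_K[OF fR KR y])
    also have "T K y = ennreal (fact (card K)) * t (card K) y"
      using T_relabel[OF fK y] fact_t by simp
    also have "(\<integral>\<^sup>+z. ennreal (Lp (cc y z) l (R - K)) \<partial>PM (R - K)) =
        ennreal (fact (card (R - K))) * lam (\<lambda>k. t k y) l (card (R - K))"
      using fR by (intro Suc.IH) auto
    also have "card (R - K) = ?m - card K" using KR fK by (simp add: card_Diff_subset)
    finally show "(\<integral>\<^sup>+x. ennreal (cc y x K * Lp (cc y x) l (R - K)) \<partial>PM R) = h (card K)"
      by (simp add: h_def)
  qed
  also have "\<dots> = (\<Sum>k\<in>{1..?m}. of_nat (?m choose k) * h k)"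
    by (rule group_card[OF fR])
  also have "\<dots> = (\<Sum>k\<in>{1..?m}. ennreal (fact ?m) * (t k y * lam (\<lambda>k. t k y) l (?m - k)))"
  proof (rule sum.cong[OF refl])
    fix k assume k: "k \<in> {1..?m}"
    have "of_nat (?m choose k) * h k = (of_nat (?m choose k) * (ennreal (fact k) * ennreal (fact (?m - k)))) * (t k y * lam (\<lambda>k. t k y) l (?m - k))"
      by (simp add: h_def mult_ac)
    also have "\<dots> = ennreal (fact ?m) * (t k y * lam (\<lambda>k. t k y) l (?m - k))"
      using k by (subst binom_fact_ennreal) auto
    finally show "of_nat (?m choose k) * h k = ennreal (fact ?m) * (t k y * lam (\<lambda>k. t k y) l (?m - k))" .
  qed
  also have "\<dots> = ennreal (fact ?m) * lam (\<lambda>k. t k y) (Suc l) ?m"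
    by (simp add: sum_distrib_left)
  finally show ?case .
qed

lemma meas_Pexp:
  assumes "R \<subseteq> J" "finite R" "y \<in> space M"
  shows "(\<lambda>x. Pexp (cc y x) R) \<in> borel_measurable (PM J)"
  unfolding Pexp_def using meas_Lp[OF assms] by measurable

lemma Pexp_integral:
  assumes fR: "finite R" and y: "y \<in> space M"
  shows "(\<integral>\<^sup>+x. ennreal (Pexp (cc y x) R) \<partial>PM R) = ennreal (fact (card R)) * Q (card R) y"
proof -
  have "(\<integral>\<^sup>+x. ennreal (Pexp (cc y x) R) \<partial>PM R) =
      (\<integral>\<^sup>+x. (\<Sum>l\<le>card R. ennreal (Lp (cc y x) l R) * ennreal (1 / fact l)) \<partial>PM R)"
  proof (rule nn_integral_cong)
    fix x
    have "ennreal (Pexp (cc y x) R) = (\<Sum>l\<le>card R. ennreal (Lp (cc y x) l R * (1 / fact l)))"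
      unfolding Pexp_def by (subst sum_ennreal) (auto intro!: divide_nonneg_pos Lp_nonneg cc_nonneg)
    also have "\<dots> = (\<Sum>l\<le>card R. ennreal (Lp (cc y x) l R) * ennreal (1 / fact l))"
      by (intro sum.cong refl ennreal_mult) (auto intro: Lp_nonneg cc_nonneg)
    finally show "ennreal (Pexp (cc y x) R) = (\<Sum>l\<le>card R. ennreal (Lp (cc y x) l R) * ennreal (1 / fact l))" .
  qed
  also have "\<dots> = (\<Sum>l\<le>card R. \<integral>\<^sup>+x. ennreal (Lp (cc y x) l R) * ennreal (1 / fact l) \<partial>PM R)"
    by (rule nn_integral_sum) (use meas_Lp[OF subset_refl fR y] in measurable)
  also have "\<dots> = (\<Sum>l\<le>card R. (\<integral>\<^sup>+x. ennreal (Lp (cc y x) l R) \<partial>PM R) * ennreal (1 / fact l))"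
    by (intro sum.cong refl nn_integral_multc) (use meas_Lp[OF subset_refl fR y] in measurable)
  also have "\<dots> = ennreal (fact (card R)) * Q (card R) y"
    unfolding Q_def Lp_integral[OF fR y] by (simp add: sum_distrib_left mult.assoc)
  finally show ?thesis .
qed

lemma root_bound:
  assumes fR: "finite R" and i: "i \<notin> R" and x: "x \<in> space (PM R)" and y: "y \<in> space M"
  shows "cmod (Cg (insert i R) (x(i := y))) \<le> Pexp (cc y x) R"
proof -
  let ?x = "x(i := y)"
  define w where "w = (\<lambda>p. \<zeta> (?x (fst p)) (?x (snd p)))"
  have xs: "\<And>u. u \<in> R \<Longrightarrow> x u \<in> space M" using x by (auto simp: space_PiM PiE_def Pi_def)
  have "Cg (insert i R) ?x = Pexp (\<lambda>K. Cw w K * ((\<Prod>u\<in>K. 1 + w (ed i u)) - 1)) R"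
    unfolding Cg_def w_def by (rule root[OF fR i])
  also have "cmod \<dots> \<le> Pexp (cc y x) R"
  proof (rule Pexp_norm[OF fR])
    fix K assume K: "K \<subseteq> R"
    have iK: "i \<notin> K" using K i by auto
    have wu: "w (ed i u) = \<zeta> y (x u)" if "u \<in> K" for u
    proof -
      have ui: "u \<noteq> i" using that iK by auto
      have "w (ed i u) = \<zeta> (?x (min i u)) (?x (max i u))" by (simp add: w_def ed_def)
      also have "\<dots> = \<zeta> y (x u)"
      proof (cases "i < u")
        case True then show ?thesis using ui by (simp add: min_def max_def)
      next
        case False
        then have "\<zeta> (?x (min i u)) (?x (max i u)) = \<zeta> (x u) y" using ui by (simp add: min_def max_def)
        also have "\<dots> = \<zeta> y (x u)" using xs[of u] that K y by (intro zeta_sym) auto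
        finally show ?thesis .
      qed
      finally show ?thesis .
    qed
    have CK: "Cw w K = Cg K x" unfolding w_def Cg_def
      by (rule Cw_cong) (use iK in \<open>auto simp: edges_def\<close>)
    have fK: "finite K" using fR K finite_subset by auto
    have "cmod ((\<Prod>u\<in>K. 1 + w (ed i u)) - 1) = cmod ((\<Prod>u\<in>K. 1 + \<zeta> y (x u)) - 1)"
      using wu by simp
    also have "\<dots> \<le> (\<Sum>u\<in>K. cmod (\<zeta> y (x u)))"
      by (rule prod_sub1_bound[OF fK]) (use zeta_bound xs K y in auto)
    finally have b: "cmod ((\<Prod>u\<in>K. 1 + w (ed i u)) - 1) \<le> (\<Sum>u\<in>K. cmod (\<zeta> y (x u)))" .
    show "cmod (Cw w K * ((\<Prod>u\<in>K. 1 + w (ed i u)) - 1)) \<le> cc y x K"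
      unfolding cc_def norm_mult CK by (rule mult_left_mono[OF b]) simp
  qed
  finally show ?thesis .
qed

lemma Pexp_cc_nonneg: "0 \<le> Pexp (cc y x) R"
  unfolding Pexp_def by (intro sum_nonneg divide_nonneg_nonneg Lp_nonneg cc_nonneg) auto

lemma T_step:
  assumes B: "B \<in> space M"
  shows "T {..<Suc m} B \<le> ennreal (fact (Suc m)) * (\<integral>\<^sup>+y. ennreal (cmod (\<zeta> B y)) * Q m y \<partial>M)"
proof -
  let ?J = "{..<Suc m}"
  let ?I = "\<integral>\<^sup>+y. ennreal (cmod (\<zeta> B y)) * Q m y \<partial>M"
  have tb: "(\<integral>\<^sup>+x. ennreal (cmod (\<zeta> B (x i)) * cmod (Cg ?J x)) \<partial>PM ?J) \<le> ennreal (fact m) * ?I"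
    if i: "i \<in> ?J" for i
  proof -
    define R where "R = ?J - {i}"
    have JR: "?J = insert i R" and iR: "i \<notin> R" and fR: "finite R" and cR: "card R = m"
      using i by (auto simp: R_def)
    let ?F = "\<lambda>x. ennreal (cmod (\<zeta> B (x i)) * cmod (Cg (insert i R) x))"
    have Fm: "?F \<in> borel_measurable (PM (insert i R))"
      using meas_zeta1[OF B, of i "insert i R"] meas_Cg[of "insert i R" "insert i R"] fR by simp
    have "(\<integral>\<^sup>+x. ennreal (cmod (\<zeta> B (x i)) * cmod (Cg ?J x)) \<partial>PM ?J) = (\<integral>\<^sup>+x. ?F x \<partial>PM (insert i R))"
      unfolding JR ..
    also have "\<dots> = (\<integral>\<^sup>+y. (\<integral>\<^sup>+x. ?F (x(i := y)) \<partial>PM R) \<partial>M)"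
      by (rule PS.product_nn_integral_insert_rev[OF fR iR Fm])
    also have "\<dots> \<le> (\<integral>\<^sup>+y. ennreal (fact m) * (ennreal (cmod (\<zeta> B y)) * Q m y) \<partial>M)"
    proof (rule nn_integral_mono)
      fix y assume y: "y \<in> space M"
      have "(\<integral>\<^sup>+x. ?F (x(i := y)) \<partial>PM R) \<le> (\<integral>\<^sup>+x. ennreal (cmod (\<zeta> B y)) * ennreal (Pexp (cc y x) R) \<partial>PM R)"
      proof (rule nn_integral_mono)
        fix x assume x: "x \<in> space (PM R)"
        have "cmod (\<zeta> B y) * cmod (Cg (insert i R) (x(i := y))) \<le> cmod (\<zeta> B y) * Pexp (cc y x) R"
          by (rule mult_left_mono[OF root_bound[OF fR iR x y]]) simp
        then have "?F (x(i := y)) \<le> ennreal (cmod (\<zeta> B y) * Pexp (cc y x) R)"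
          by (simp add: ennreal_leI)
        also have "\<dots> = ennreal (cmod (\<zeta> B y)) * ennreal (Pexp (cc y x) R)"
          by (rule ennreal_mult) (simp_all add: Pexp_cc_nonneg)
        finally show "?F (x(i := y)) \<le> ennreal (cmod (\<zeta> B y)) * ennreal (Pexp (cc y x) R)" .
      qed
      also have "\<dots> = ennreal (cmod (\<zeta> B y)) * (\<integral>\<^sup>+x. ennreal (Pexp (cc y x) R) \<partial>PM R)"
        by (rule nn_integral_cmult) (use meas_Pexp[OF subset_refl fR y] in measurable)
      also have "\<dots> = ennreal (fact m) * (ennreal (cmod (\<zeta> B y)) * Q m y)"
        unfolding Pexp_integral[OF fR y] cR by (simp add: mult_ac)
      finally show "(\<integral>\<^sup>+x. ?F (x(i := y)) \<partial>PM R) \<le> ennreal (fact m) * (ennreal (cmod (\<zeta> B y)) * Q m y)" .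
    qed
    also have "\<dots> = ennreal (fact m) * ?I"
      by (rule nn_integral_cmult) (use meas_Q meas_zeta1M[OF B] in measurable)
    finally show ?thesis .
  qed
  have "T ?J B = (\<integral>\<^sup>+x. (\<Sum>i\<in>?J. ennreal (cmod (\<zeta> B (x i)) * cmod (Cg ?J x))) \<partial>PM ?J)"
    unfolding T_def by (intro nn_integral_cong, subst sum_ennreal) (auto simp: sum_distrib_right simp del: sum.lessThan_Suc)
  also have "\<dots> = (\<Sum>i\<in>?J. \<integral>\<^sup>+x. ennreal (cmod (\<zeta> B (x i)) * cmod (Cg ?J x)) \<partial>PM ?J)"
    by (rule nn_integral_sum) (use meas_zeta1[OF B] meas_Cg[of ?J ?J] in measurable)
  also have "\<dots> \<le> (\<Sum>i\<in>?J. ennreal (fact m) * ?I)"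
    by (rule sum_mono) (rule tb)
  also have "\<dots> = of_nat (Suc m) * (ennreal (fact m) * ?I)" by simp
  also have "\<dots> = ennreal (fact (Suc m)) * ?I"
    by (simp add: ennreal_of_nat_eq_real_of_nat ennreal_mult[symmetric] mult.assoc[symmetric] del: of_nat_Suc)
  finally show ?thesis .
qed

end


context KPs begin

lemma main_ind:
  assumes a_nonneg: "\<And>x. x \<in> space M \<Longrightarrow> 0 \<le> a x"
    and KP: "\<And>x. x \<in> space M \<Longrightarrow> (\<integral>\<^sup>+ y. ennreal (cmod (\<zeta> x y) * exp (a y)) \<partial>M) \<le> ennreal (a x)"
  shows "\<forall>B\<in>space M. (\<Sum>k\<in>{1..N}. t k B) \<le> ennreal (a B)"
proof (induction N)
  case 0 then show ?case by simp
next
  case (Suc N)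
  show ?case
  proof
    fix B assume B: "B \<in> space M"
    let ?I = "\<lambda>m. \<integral>\<^sup>+y. ennreal (cmod (\<zeta> B y)) * Q m y \<partial>M"
    have "(\<Sum>k\<in>{1..Suc N}. t k B) = (\<Sum>m<Suc N. t (Suc m) B)"
      using sum.atLeast1_atMost_eq[of "\<lambda>k. t k B" "Suc N"] by simp
    also have "\<dots> \<le> (\<Sum>m<Suc N. ?I m)"
    proof (rule sum_mono)
      fix m
      have "t (Suc m) B \<le> ennreal (1 / fact (Suc m)) * (ennreal (fact (Suc m)) * ?I m)"
        unfolding t_def by (intro mult_left_mono T_step[OF B]) auto
      also have "\<dots> = ennreal (1 / fact (Suc m) * fact (Suc m)) * ?I m"
        by (subst ennreal_mult) (auto simp: mult.assoc)
      also have "\<dots> = ?I m" by simp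
      finally show "t (Suc m) B \<le> ?I m" .
    qed
    also have "\<dots> = (\<integral>\<^sup>+y. (\<Sum>m<Suc N. ennreal (cmod (\<zeta> B y)) * Q m y) \<partial>M)"
      by (rule nn_integral_sum[symmetric]) (use meas_Q meas_zeta1M[OF B] in measurable)
    also have "\<dots> \<le> (\<integral>\<^sup>+y. ennreal (cmod (\<zeta> B y) * exp (a y)) \<partial>M)"
    proof (rule nn_integral_mono)
      fix y assume y: "y \<in> space M"
      have "(\<Sum>m\<le>N. Q m y) \<le> ennreal (exp (a y))"
        unfolding Q_def by (rule Q_bound) (use Suc.IH y a_nonneg in auto)
      then have "(\<Sum>m<Suc N. Q m y) \<le> ennreal (exp (a y))"
        by (simp add: lessThan_Suc_atMost)
      then have "ennreal (cmod (\<zeta> B y)) * (\<Sum>m<Suc N. Q m y) \<le> ennreal (cmod (\<zeta> B y)) * ennreal (exp (a y))"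
        by (rule mult_left_mono) simp
      also have "\<dots> = ennreal (cmod (\<zeta> B y) * exp (a y))" by (rule ennreal_mult[symmetric]) auto
      finally show "(\<Sum>m<Suc N. ennreal (cmod (\<zeta> B y)) * Q m y) \<le> ennreal (cmod (\<zeta> B y) * exp (a y))"
        by (simp only: sum_distrib_left)
    qed
    also have "\<dots> \<le> ennreal (a B)" by (rule KP[OF B])
    finally show "(\<Sum>k\<in>{1..Suc N}. t k B) \<le> ennreal (a B)" .
  qed
qed

lemma conn_graphs_eq: "conn_graphs n = {G. conn {..<n} G}"
  unfolding conn_graphs_def connected_graph_def conn_def graph_edges_def edges_def
  by auto

lemma conn_one: "{G. conn {..<Suc 0} G} = {{}}"
  by (auto simp: conn_def edges_def)

lemma ursell_Cg: "ursell \<zeta> (Suc n) x = Cg {..<Suc n} x / fact (Suc n)"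
proof (cases n)
  case 0
  then show ?thesis by (simp add: ursell_def Cg_def Cw_def conn_one)
next
  case (Suc k)
  have "ursell \<zeta> (Suc n) x = (1 / fact (Suc n)) * (\<Sum>G\<in>conn_graphs (Suc n). \<Prod>(i, j)\<in>G. \<zeta> (x i) (x j))"
  proof -
    have ne: "(Suc n = 1) = False" using Suc by simp
    show ?thesis by (simp only: ursell_def ne if_False of_nat_fact)
  qed
  also have "(\<Sum>G\<in>conn_graphs (Suc n). \<Prod>(i, j)\<in>G. \<zeta> (x i) (x j)) = Cg {..<Suc n} x"
    unfolding Cg_def Cw_def conn_graphs_eq by (simp only: case_prod_unfold)
  finally show ?thesis by simp
qed

end

theorem mainTheorem2:
  fixes M :: "'a measure" and \<zeta> :: "'a \<Rightarrow> 'a \<Rightarrow> complex" and a :: "'a \<Rightarrow> real"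
  assumes fin: "finite_measure M"
    and zeta_meas: "(\<lambda>p. \<zeta> (fst p) (snd p)) \<in> borel_measurable (M \<Otimes>\<^sub>M M)"
    and zeta_sym: "\<And>x y. x \<in> space M \<Longrightarrow> y \<in> space M \<Longrightarrow> \<zeta> x y = \<zeta> y x"
    and zeta_bound: "\<And>x y. x \<in> space M \<Longrightarrow> y \<in> space M \<Longrightarrow> cmod (1 + \<zeta> x y) \<le> 1"
    and a_meas: "a \<in> borel_measurable M"
    and a_nonneg: "\<And>x. x \<in> space M \<Longrightarrow> 0 \<le> a x"
    and KP: "\<And>x. x \<in> space M \<Longrightarrow>
       (\<integral>\<^sup>+ y. ennreal (cmod (\<zeta> x y) * exp (a y)) \<partial>M) \<le> ennreal (a x)"
    and exp_fin: "(\<integral>\<^sup>+ y. ennreal (exp (a y)) \<partial>M) < \<infinity>"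
    and A: "A \<in> space M"
  shows "(\<Sum>n. \<integral>\<^sup>+ x. ennreal ((\<Sum>i<Suc n. cmod (\<zeta> A (x i))) * cmod (ursell \<zeta> (Suc n) x))
            \<partial>(PiM {..<Suc n} (\<lambda>_. M))) \<le> ennreal (a A)"
proof -
  interpret KPs M \<zeta>
    by (intro KPs.intro) (use fin zeta_meas zeta_sym zeta_bound in auto)
  have eq: "(\<integral>\<^sup>+ x. ennreal ((\<Sum>i<Suc n. cmod (\<zeta> A (x i))) * cmod (ursell \<zeta> (Suc n) x))
            \<partial>(PiM {..<Suc n} (\<lambda>_. M))) = t (Suc n) A" for n
  proof -
    have "(\<integral>\<^sup>+ x. ennreal ((\<Sum>i<Suc n. cmod (\<zeta> A (x i))) * cmod (ursell \<zeta> (Suc n) x)) \<partial>PM {..<Suc n})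
        = (\<integral>\<^sup>+ x. ennreal (1 / fact (Suc n)) * ennreal ((\<Sum>i<Suc n. cmod (\<zeta> A (x i))) * cmod (Cg {..<Suc n} x)) \<partial>PM {..<Suc n})"
    proof (rule nn_integral_cong)
      fix x
      have "cmod (ursell \<zeta> (Suc n) x) = cmod (Cg {..<Suc n} x) / fact (Suc n)"
      proof -
        have hf: "cmod (fact (Suc n)) = fact (Suc n)" by (metis norm_of_nat of_nat_fact)
        show ?thesis by (simp only: ursell_Cg norm_divide hf)
      qed
      then have e: "(\<Sum>i<Suc n. cmod (\<zeta> A (x i))) * cmod (ursell \<zeta> (Suc n) x) =
          (1 / fact (Suc n)) * ((\<Sum>i<Suc n. cmod (\<zeta> A (x i))) * cmod (Cg {..<Suc n} x))"
        by simp
      show "ennreal ((\<Sum>i<Suc n. cmod (\<zeta> A (x i))) * cmod (ursell \<zeta> (Suc n) x)) =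
          ennreal (1 / fact (Suc n)) * ennreal ((\<Sum>i<Suc n. cmod (\<zeta> A (x i))) * cmod (Cg {..<Suc n} x))"
        unfolding e by (rule ennreal_mult') simp
    qed
    also have "\<dots> = ennreal (1 / fact (Suc n)) * T {..<Suc n} A"
      unfolding T_def
      by (rule nn_integral_cmult) (use meas_zeta1[OF A] meas_Cg[of "{..<Suc n}" "{..<Suc n}"] in measurable)
    finally show ?thesis by (simp add: t_def)
  qed
  have "(\<Sum>n. t (Suc n) A) \<le> ennreal (a A)"
  proof (rule suminf_le_const)
    fix n
    have "(\<Sum>i<n. t (Suc i) A) = (\<Sum>k\<in>{1..n}. t k A)"
      using sum.atLeast1_atMost_eq[of "\<lambda>k. t k A" n] by simp
    also have "\<dots> \<le> ennreal (a A)" using main_ind[OF a_nonneg KP] A by blast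
    finally show "(\<Sum>i<n. t (Suc i) A) \<le> ennreal (a A)" .
  qed simp
  then show ?thesis by (simp only: eq)
qed


end
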